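(* Let $\psi$ be the four-taxon network described in the context, with $w=0$ and $\gamma=1/2$, and one gene copy per taxon. In the limit $x\to\infty$, the limiting probabilities of the gene tree topologies $((a,b),(c,d))$ and $((a,c),(b,d))$ (both equal to $\tfrac14 e^{-y}$) exceed the limiting probabilities of each of the two trees displayed by $\psi$, namely $((a,(b,c)),d)$ and $(a,((b,c),d))$ (both equal to $\tfrac12-\tfrac{5}{12}e^{-y}$), if and only if $y<\ln(4/3)\approx 0.288$. Consequently, for such $y$ (and all sufficiently large $x$) the most likely gene tree topology is not a tree displayed by $\psi$.
   Context: The network $\psi$ on taxa $A,B,C,D$ (gene copies $a,b,c,d$): the root $r$ has two children $p$ and $q$, with edges $(r,p)$ and $(r,q)$ both of length $x$. Node $p$ has children the leaf $A$ and a reticulation node $h$; node $q$ has children the leaf $D$ and $h$. The reticulation edges $(p,h)$ and $(q,h)$ have length $w=0$ and inheritance probabilities $\gamma$ and $1-\gamma$ respectively. Node $h$ has a single child $m$ via an edge of length $y>0$, and $m$ has the two leaf children $B$ and $C$. A tree is displayed by a network if it is obtained by deleting, for each reticulation node, one of its two incoming edges and then suppressing nodes of in-degree 1 and out-degree 1; here the displayed trees are $((A,(B,C)),D)$ and $(A,((B,C),D))$. Multispecies network coalescent: gene lineages are traced backward in time from the leaves; within each branch every pair of lineages present coalesces independently at rate 1 per coalescent unit for the branch's duration; when a lineage reaches a reticulation node it independently enters the incoming edge $b$ with probability equal to its inheritance probability; above the root all remaining lineages coalesce. Probabilities of gene tree topologies are with respect to this process. *)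

theory Defs
  imports "HOL-Probability.Probability"
begin

text \<open>A gene lineage is represented by the set of
  clusters (sets of gene copies) of the partial gene tree it carries; a rooted gene
  tree topology on {a,b,c,d} is identified with its set of clusters.\<close>

datatype copy = Ga | Gb | Gc | Gd

type_synonym lineage = "copy set set"

definition leaf_lin :: "copy \<Rightarrow> lineage" where
  "leaf_lin g = {{g}}"

definition merge_lin :: "lineage \<Rightarrow> lineage \<Rightarrow> lineage" where
  "merge_lin l1 l2 = l1 \<union> l2 \<union> {\<Union>l1 \<union> \<Union>l2}"

definition merge_step :: "lineage set \<Rightarrow> lineage set pmf" where
  "merge_step L =
     (if finite L \<and> card L \<ge> 2 then
        map_pmf (\<lambda>(l1, l2). insert (merge_lin l1 l2) (L - {l1, l2}))
          (pmf_of_set {(l1, l2). l1 \<in> L \<and> l2 \<in> L \<and> l1 \<noteq> l2})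
      else return_pmf L)"

text \<open>A sequence of k coalescence events (jump chain of the Kingman coalescent).\<close>
primrec merge_seq :: "nat \<Rightarrow> lineage set \<Rightarrow> lineage set pmf" where
  "merge_seq 0 L = return_pmf L"
| "merge_seq (Suc k) L = bind_pmf (merge_step L) (merge_seq k)"

text \<open>Tavare's formula: probability that i lineages coalesce into exactly j lineages
  within time T (coalescent units), for 1 \<le> j \<le> i.\<close>
definition g_coal :: "nat \<Rightarrow> nat \<Rightarrow> real \<Rightarrow> real" where
  "g_coal i j T =
     (\<Sum>k = j..i. exp (- (real k * (real k - 1) / 2) * T) * (2 * real k - 1)
        * (-1) ^ (k - j) * pochhammer (real j) (k - 1) * (fact i / fact (i - k))
        / (fact j * fact (k - j) * pochhammer (real i) k))"

definition num_lin_dist :: "nat \<Rightarrow> real \<Rightarrow> nat pmf" where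
  "num_lin_dist n T = embed_pmf (\<lambda>j. if 1 \<le> j \<and> j \<le> n then g_coal n j T else 0)"

definition branch :: "real \<Rightarrow> lineage set \<Rightarrow> lineage set pmf" where
  "branch T L =
     (if card L \<le> 1 then return_pmf L
      else bind_pmf (num_lin_dist (card L) T) (\<lambda>j. merge_seq (card L - j) L))"

definition root_coal :: "lineage set \<Rightarrow> lineage set pmf" where
  "root_coal L = merge_seq (card L - 1) L"

text \<open>At reticulation node h each lineage independently goes to parent p with
  probability gam and to parent q with probability 1 - gam.\<close>
definition split_ret :: "real \<Rightarrow> lineage set \<Rightarrow> (lineage set \<times> lineage set) pmf" where
  "split_ret gam L =
     map_pmf (\<lambda>f. ({l \<in> L. f l}, {l \<in> L. \<not> f l}))
       (Pi_pmf L False (\<lambda>_. bernoulli_pmf gam))"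

text \<open>Distribution of the gene tree topology under the MSNC on psi with root edges of
  length x, edge (h,m) of length y, reticulation edges of length w and inheritance
  probability gam on (p,h).  Leaf edges carry a single lineage and are omitted.\<close>
definition psi_gene_tree :: "real \<Rightarrow> real \<Rightarrow> real \<Rightarrow> real \<Rightarrow> lineage pmf" where
  "psi_gene_tree x y w gam =
     bind_pmf (branch y {leaf_lin Gb, leaf_lin Gc}) (\<lambda>Lm.
     bind_pmf (split_ret gam Lm) (\<lambda>(Sp, Sq).
     bind_pmf (branch w Sp) (\<lambda>Sp'.
     bind_pmf (branch w Sq) (\<lambda>Sq'.
     bind_pmf (branch x (insert (leaf_lin Ga) Sp')) (\<lambda>Lp.
     bind_pmf (branch x (insert (leaf_lin Gd) Sq')) (\<lambda>Lq.
     map_pmf the_elem (root_coal (Lp \<union> Lq))))))))"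

definition psi_prob :: "real \<Rightarrow> real \<Rightarrow> real \<Rightarrow> real \<Rightarrow> lineage \<Rightarrow> real" where
  "psi_prob x y w gam G = pmf (psi_gene_tree x y w gam) G"

definition singletons :: "copy set set" where
  "singletons = {{Ga}, {Gb}, {Gc}, {Gd}, {Ga, Gb, Gc, Gd}}"

definition T_ab_cd :: lineage where
  "T_ab_cd = singletons \<union> {{Ga, Gb}, {Gc, Gd}}"
definition T_ac_bd :: lineage where
  "T_ac_bd = singletons \<union> {{Ga, Gc}, {Gb, Gd}}"
definition T_disp1 :: lineage where
  "T_disp1 = singletons \<union> {{Gb, Gc}, {Ga, Gb, Gc}}"
definition T_disp2 :: lineage where
  "T_disp2 = singletons \<union> {{Gb, Gc}, {Gb, Gc, Gd}}"

definition displayed_trees :: "lineage set" where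
  "displayed_trees = {T_disp1, T_disp2}"

end

theory Submission
  imports Defs "HOL-Real_Asymp.Real_Asymp"
begin

lemma ivs: "{1..2::nat} = {1,2}" "{2..2::nat} = {2}" "{1..3::nat} = {1,2,3}" "{2..3::nat} = {2,3}" "{3..3::nat} = {3}"
  "{Suc 0..2::nat} = {1,2}" "{Suc 0..3::nat} = {1,2,3}"
  by auto

lemma g21: "g_coal 2 1 T = 1 - exp (-T)"
  unfolding g_coal_def by (simp add: ivs eval_nat_numeral pochhammer_Suc)
lemma g22: "g_coal 2 2 T = exp (-T)"
  unfolding g_coal_def by (simp add: ivs eval_nat_numeral pochhammer_Suc)
lemma g31: "g_coal 3 1 T = 1 - 3/2 * exp (-T) + 1/2 * exp (-(3*T))"
  unfolding g_coal_def by (simp add: ivs eval_nat_numeral pochhammer_Suc)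
lemma g32: "g_coal 3 2 T = 3/2 * (exp (-T) - exp (-(3*T)))"
  unfolding g_coal_def by (simp add: ivs eval_nat_numeral pochhammer_Suc)
lemma g33: "g_coal 3 3 T = exp (-(3*T))"
  unfolding g_coal_def by (simp add: ivs eval_nat_numeral pochhammer_Suc)

lemma g21s: "g_coal 2 (Suc 0) T = 1 - exp (-T)" using g21 by simp
lemma g31s: "g_coal 3 (Suc 0) T = 1 - 3/2 * exp (-T) + 1/2 * exp (-(3*T))" using g31 by simp

lemma exp3: "exp (-(3*T)) = exp (-T)^3" for T :: real
proof -
  have "exp (-(3*T)) = exp (real 3 * (-T))" by simp
  then show ?thesis by (simp only: exp_of_nat_mult)
qed

lemma u_facts: assumes "(T::real) \<ge> 0" shows "0 < exp (-T) \<and> exp (-T) \<le> 1"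
  using assms by simp

lemma g_nonneg:
  assumes "T \<ge> 0" "n \<in> {2,3}" "1 \<le> j" "j \<le> n"
  shows "0 \<le> g_coal n j T"
proof -
  define u where "u = exp (-T)"
  have u: "0 < u" "u \<le> 1" using u_facts[OF assms(1)] by (auto simp: u_def)
  have u3: "u^3 \<le> u" using u by (simp add: power_le_one power3_eq_cube mult_le_one)
  have "u^3 \<le> 1" using u by (simp add: power_le_one)
  have k: "0 \<le> (1-u)^2*(2+u)" using u by simp
  have "(1-u)^2*(2+u) = 2 - 3*u + u^3" by (simp add: power2_eq_square power3_eq_cube algebra_simps)
  hence "0 \<le> 2 - 3*u + u^3" using k by simp
  have "(n=2 \<and> (j=1 \<or> j=2)) \<or> (n=3 \<and> (j=1 \<or> j=2 \<or> j=3))" using assms(2-4) by auto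
  then show ?thesis using u u3 \<open>0 \<le> 2 - 3*u + u^3\<close>
    by (auto simp: g21 g22 g31 g32 g33 g21s g31s exp3 u_def[symmetric])
qed

lemma g_sum:
  assumes "n \<in> {2,3}"
  shows "(\<Sum>j\<in>{1..n}. g_coal n j T) = 1"
  using assms by (auto simp: ivs g21 g22 g31 g32 g33 g21s g31s field_simps)

lemma pmf_nld:
  assumes "T \<ge> 0" "n \<in> {2,3}"
  shows "pmf (num_lin_dist n T) j = (if 1 \<le> j \<and> j \<le> n then g_coal n j T else 0)"
  unfolding num_lin_dist_def
proof (rule pmf_embed_pmf)
  show "\<And>x. 0 \<le> (if 1 \<le> x \<and> x \<le> n then g_coal n x T else 0)"
    using g_nonneg[OF assms] by auto
  have "(\<integral>\<^sup>+ x. ennreal (if 1 \<le> x \<and> x \<le> n then g_coal n x T else 0) \<partial>count_space UNIV)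
     = (\<Sum>x\<in>{1..n}. ennreal (if 1 \<le> x \<and> x \<le> n then g_coal n x T else 0))"
    by (rule nn_integral_count_space') auto
  also have "\<dots> = (\<Sum>x\<in>{1..n}. ennreal (g_coal n x T))"
    by (rule sum.cong) auto
  also have "\<dots> = ennreal (\<Sum>x\<in>{1..n}. g_coal n x T)"
    by (rule sum_ennreal) (use g_nonneg[OF assms] in auto)
  also have "\<dots> = 1" using g_sum[OF assms(2)] by simp
  finally show "(\<integral>\<^sup>+ x. ennreal (if 1 \<le> x \<and> x \<le> n then g_coal n x T else 0) \<partial>count_space UNIV) = 1" .
qed

lemma pmf_bind_nld:
  assumes "T \<ge> 0" "n \<in> {2,3}"
  shows "pmf (bind_pmf (num_lin_dist n T) F) G = (\<Sum>j\<in>{1..n}. g_coal n j T * pmf (F j) G)"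
proof -
  have "pmf (bind_pmf (num_lin_dist n T) F) G = (\<integral>j. pmf (F j) G \<partial>measure_pmf (num_lin_dist n T))"
    by (rule pmf_bind)
  also have "\<dots> = (\<Sum>j\<in>{1..n}. pmf (F j) G * pmf (num_lin_dist n T) j)"
    by (rule integral_measure_pmf_real) (auto simp: set_pmf_iff pmf_nld[OF assms] split: if_splits)
  also have "\<dots> = (\<Sum>j\<in>{1..n}. g_coal n j T * pmf (F j) G)"
    by (rule sum.cong) (auto simp: pmf_nld[OF assms])
  finally show ?thesis .
qed

lemma branch_bind:
  assumes "T \<ge> 0" "card L \<in> {2,3}"
  shows "pmf (bind_pmf (branch T L) K) G
     = (\<Sum>j\<in>{1..card L}. g_coal (card L) j T * pmf (bind_pmf (merge_seq (card L - j) L) K) G)"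
proof -
  have "branch T L = bind_pmf (num_lin_dist (card L) T) (\<lambda>j. merge_seq (card L - j) L)"
    using assms(2) unfolding branch_def by auto
  then show ?thesis by (simp add: bind_assoc_pmf pmf_bind_nld[OF assms])
qed

lemma branch_approx:
  assumes "T \<ge> 0" "card L \<in> {1,2,3}"
  shows "\<bar>pmf (bind_pmf (branch T L) K) G - pmf (bind_pmf (merge_seq (card L - 1) L) K) G\<bar> \<le> 4 * exp (-T)"
proof -
  define u where "u = exp (-T)"
  have u: "0 < u" "u \<le> 1" using u_facts[OF assms(1)] by (auto simp: u_def)
  have u3: "u^3 \<le> u" using u by (simp add: power_le_one power3_eq_cube mult_le_one)
  have u30: "0 \<le> u^3" using u by simp
  define P where "P = (\<lambda>k. pmf (bind_pmf (merge_seq k L) K) G)"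
  have P: "\<And>k. 0 \<le> P k" "\<And>k. P k \<le> 1" by (auto simp: P_def pmf_le_1)
  have Pk: "\<And>k. pmf (bind_pmf (merge_seq k L) K) G = P k" by (simp add: P_def)
  show ?thesis
  proof (cases "card L = 1")
    case True
    then show ?thesis using u by (simp add: branch_def u_def[symmetric])
  next
    case False
    then have c: "card L \<in> {2,3}" using assms by auto
    have e: "pmf (bind_pmf (branch T L) K) G = (\<Sum>j\<in>{1..card L}. g_coal (card L) j T * P (card L - j))"
      unfolding P_def by (rule branch_bind[OF assms(1) c])
    show ?thesis
    proof (cases "card L = 2")
      case True
      have "\<bar>(1-u) * P 1 + u * P 0 - P 1\<bar> = \<bar>u * (P 0 - P 1)\<bar>" by (simp add: algebra_simps)
      also have "\<dots> \<le> u * 1" using P[of 0] P[of 1] u by (simp add: abs_mult abs_le_iff)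
      finally have "\<bar>(1-u) * P 1 + u * P 0 - P 1\<bar> \<le> 4*u" using u by simp
      then show ?thesis unfolding Pk using True e by (simp add: ivs g21 g22 g21s u_def[symmetric])
    next
      case False
      then have c3: "card L = 3" using c by auto
      have "\<bar>(1 - 3/2*u + 1/2*u^3) * P 2 + (3/2*(u - u^3)) * P 1 + u^3 * P 0 - P 2\<bar>
          = \<bar>(3/2*(u - u^3)) * (P 1 - P 2) + u^3 * (P 0 - P 2)\<bar>" by (rule arg_cong[where f=abs]) (simp add: field_simps)
      also have "\<dots> \<le> \<bar>(3/2*(u - u^3)) * (P 1 - P 2)\<bar> + \<bar>u^3 * (P 0 - P 2)\<bar>" by (rule abs_triangle_ineq)
      also have "\<dots> \<le> (3/2*(u - u^3)) * 1 + u^3 * 1"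
      proof (rule add_mono)
        have a1: "\<bar>P 1 - P 2\<bar> \<le> 1" using P[of 1] P[of 2] by (auto simp: abs_le_iff)
        have a2: "\<bar>P 0 - P 2\<bar> \<le> 1" using P[of 0] P[of 2] by (auto simp: abs_le_iff)
        have nn: "0 \<le> 3/2*(u - u^3)" using u3 by simp
        show "\<bar>(3/2*(u - u^3)) * (P 1 - P 2)\<bar> \<le> (3/2*(u - u^3)) * 1"
          unfolding abs_mult using mult_left_mono[OF a1 nn] nn by simp
        show "\<bar>u^3 * (P 0 - P 2)\<bar> \<le> u^3 * 1"
          unfolding abs_mult using mult_left_mono[OF a2 u30] u30 by simp
      qed
      also have "\<dots> \<le> 4 * u" using u u3 u30 by (simp add: field_simps)
      finally have calc: "\<bar>(1 - 3/2*u + 1/2*u^3) * P 2 + (3/2*(u - u^3)) * P 1 + u^3 * P 0 - P 2\<bar> \<le> 4 * exp (-T)"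
        by (simp add: u_def)
      have e3: "pmf (bind_pmf (branch T L) K) G = (1 - 3/2*u + 1/2*u^3) * P 2 + (3/2*(u - u^3)) * P 1 + u^3 * P 0"
        using c3 e by (simp add: ivs g31 g32 g33 g31s exp3 u_def[symmetric])
      have m: "card L - 1 = 2" using c3 by simp
      show ?thesis unfolding Pk e3 m by (rule calc)
    qed
  qed
qed

lemma merge_lin_commute: "merge_lin a b = merge_lin b a"
  unfolding merge_lin_def by auto

lemma set_merge_step:
  assumes "finite L" "S \<in> set_pmf (merge_step L)"
  shows "finite S \<and> card S \<le> card L"
proof (cases "card L \<ge> 2")
  case True
  define P where "P = {(l1, l2). l1 \<in> L \<and> l2 \<in> L \<and> l1 \<noteq> l2}"
  have fP: "finite P" unfolding P_def
    by (rule finite_subset[of _ "L \<times> L"]) (use assms(1) in auto)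
  have "L \<noteq> {}" using True by auto
  then obtain a where a: "a \<in> L" by auto
  have "card (L - {a}) \<ge> 1" using True a assms(1) by (simp add: card_Diff_singleton)
  then have "L - {a} \<noteq> {}" by (metis card.empty not_one_le_zero)
  then obtain b where "b \<in> L - {a}" by auto
  then have ab: "a \<in> L" "b \<in> L" "a \<noteq> b" using a by auto
  have nP: "P \<noteq> {}" using ab unfolding P_def by auto
  from assms(2) True assms(1) obtain l1 l2 where l: "(l1,l2) \<in> P" and S: "S = insert (merge_lin l1 l2) (L - {l1, l2})"
    unfolding merge_step_def P_def[symmetric] using fP nP by auto
  have "card (L - {l1,l2}) = card L - 2" using l assms(1) unfolding P_def by (auto simp: card_Diff_subset)
  moreover have "card S \<le> Suc (card (L - {l1,l2}))" unfolding S using card_insert_le_m1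
    by (metis assms(1) card_insert_if finite_Diff le_SucI order_refl)
  ultimately show ?thesis using S assms(1) True by simp
next
  case False
  then show ?thesis using assms unfolding merge_step_def by auto
qed

lemma set_merge_seq:
  "finite L \<Longrightarrow> S \<in> set_pmf (merge_seq k L) \<Longrightarrow> finite S \<and> card S \<le> card L"
proof (induction k arbitrary: L)
  case 0
  then show ?case by simp
next
  case (Suc k)
  from Suc.prems obtain L' where L': "L' \<in> set_pmf (merge_step L)" "S \<in> set_pmf (merge_seq k L')" by auto
  have "finite L' \<and> card L' \<le> card L" using set_merge_step[OF Suc.prems(1) L'(1)] .
  with Suc.IH[of L'] L'(2) show ?case by auto
qed

lemma set_branch:
  "finite L \<Longrightarrow> S \<in> set_pmf (branch T L) \<Longrightarrow> finite S \<and> card S \<le> card L"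
  unfolding branch_def by (auto split: if_splits dest: set_merge_seq)

lemma set_split_ret:
  "(Sp, Sq) \<in> set_pmf (split_ret g L) \<Longrightarrow> Sp \<subseteq> L \<and> Sq \<subseteq> L"
  unfolding split_ret_def by auto

lemma layer:
  assumes "\<And>a. a \<in> set_pmf M \<Longrightarrow> \<bar>pmf (f a) G - pmf (g a) G\<bar> \<le> c"
  shows "\<bar>pmf (bind_pmf M f) G - pmf (bind_pmf M g) G\<bar> \<le> c"
proof -
  have i1: "integrable (measure_pmf M) (\<lambda>a. pmf (f a) G)"
    by (rule measure_pmf.integrable_const_bound[where B=1]) (auto simp: pmf_le_1)
  have i2: "integrable (measure_pmf M) (\<lambda>a. pmf (g a) G)"
    by (rule measure_pmf.integrable_const_bound[where B=1]) (auto simp: pmf_le_1)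
  have "pmf (bind_pmf M f) G - pmf (bind_pmf M g) G = (\<integral>a. pmf (f a) G - pmf (g a) G \<partial>M)"
    unfolding pmf_bind using i1 i2 by simp
  also have "\<bar>\<dots>\<bar> \<le> (\<integral>a. \<bar>pmf (f a) G - pmf (g a) G\<bar> \<partial>M)"
    by (rule integral_abs_bound)
  also have "\<dots> \<le> c"
    by (rule measure_pmf.integral_le_const) (use i1 i2 assms in \<open>auto simp: AE_measure_pmf_iff\<close>)
  finally show ?thesis .
qed

definition full :: "lineage set \<Rightarrow> lineage set pmf" where
  "full L = merge_seq (card L - 1) L"

definition psi_inf :: "real \<Rightarrow> real \<Rightarrow> real \<Rightarrow> lineage pmf" where
  "psi_inf y w gam =
     bind_pmf (branch y {leaf_lin Gb, leaf_lin Gc}) (\<lambda>Lm.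
     bind_pmf (split_ret gam Lm) (\<lambda>(Sp, Sq).
     bind_pmf (branch w Sp) (\<lambda>Sp'.
     bind_pmf (branch w Sq) (\<lambda>Sq'.
     bind_pmf (full (insert (leaf_lin Ga) Sp')) (\<lambda>Lp.
     bind_pmf (full (insert (leaf_lin Gd) Sq')) (\<lambda>Lq.
     map_pmf the_elem (root_coal (Lp \<union> Lq))))))))"

lemma card_bc: "card {leaf_lin Gb, leaf_lin Gc} = 2"
  by (simp add: leaf_lin_def)

lemma psi_approx:
  assumes "x \<ge> 0"
  shows "\<bar>psi_prob x y 0 gam G - pmf (psi_inf y 0 gam) G\<bar> \<le> 8 * exp (-x)"
  unfolding psi_prob_def psi_gene_tree_def psi_inf_def
proof (rule layer)
  fix Lm assume Lm: "Lm \<in> set_pmf (branch y {leaf_lin Gb, leaf_lin Gc})"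
  have fLm: "finite Lm \<and> card Lm \<le> 2" using set_branch[OF _ Lm] card_bc by simp
  show "\<bar>pmf (split_ret gam Lm \<bind> (\<lambda>(Sp, Sq). branch 0 Sp \<bind> (\<lambda>Sp'. branch 0 Sq \<bind> (\<lambda>Sq'. branch x (insert (leaf_lin Ga) Sp') \<bind> (\<lambda>Lp. branch x (insert (leaf_lin Gd) Sq') \<bind> (\<lambda>Lq. map_pmf the_elem (root_coal (Lp \<union> Lq)))))))) G -
         pmf (split_ret gam Lm \<bind> (\<lambda>(Sp, Sq). branch 0 Sp \<bind> (\<lambda>Sp'. branch 0 Sq \<bind> (\<lambda>Sq'. full (insert (leaf_lin Ga) Sp') \<bind> (\<lambda>Lp. full (insert (leaf_lin Gd) Sq') \<bind> (\<lambda>Lq. map_pmf the_elem (root_coal (Lp \<union> Lq)))))))) G\<bar>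
         \<le> 8 * exp (- x)"
  proof (rule layer, clarify)
    fix Sp Sq assume SS: "(Sp, Sq) \<in> set_pmf (split_ret gam Lm)"
    have fS: "finite Sp" "card Sp \<le> 2" "finite Sq" "card Sq \<le> 2"
      using set_split_ret[OF SS] fLm by (auto intro: finite_subset card_mono order.trans)
    show "\<bar>pmf (branch 0 Sp \<bind> (\<lambda>Sp'. branch 0 Sq \<bind> (\<lambda>Sq'. branch x (insert (leaf_lin Ga) Sp') \<bind> (\<lambda>Lp. branch x (insert (leaf_lin Gd) Sq') \<bind> (\<lambda>Lq. map_pmf the_elem (root_coal (Lp \<union> Lq))))))) G -
         pmf (branch 0 Sp \<bind> (\<lambda>Sp'. branch 0 Sq \<bind> (\<lambda>Sq'. full (insert (leaf_lin Ga) Sp') \<bind> (\<lambda>Lp. full (insert (leaf_lin Gd) Sq') \<bind> (\<lambda>Lq. map_pmf the_elem (root_coal (Lp \<union> Lq))))))) G\<bar>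
         \<le> 8 * exp (- x)"
    proof (rule layer)
      fix Sp' assume Sp': "Sp' \<in> set_pmf (branch 0 Sp)"
      have fSp': "finite Sp'" "card Sp' \<le> 2" using set_branch[OF fS(1) Sp'] fS(2) by auto
      show "\<bar>pmf (branch 0 Sq \<bind> (\<lambda>Sq'. branch x (insert (leaf_lin Ga) Sp') \<bind> (\<lambda>Lp. branch x (insert (leaf_lin Gd) Sq') \<bind> (\<lambda>Lq. map_pmf the_elem (root_coal (Lp \<union> Lq)))))) G -
         pmf (branch 0 Sq \<bind> (\<lambda>Sq'. full (insert (leaf_lin Ga) Sp') \<bind> (\<lambda>Lp. full (insert (leaf_lin Gd) Sq') \<bind> (\<lambda>Lq. map_pmf the_elem (root_coal (Lp \<union> Lq)))))) G\<bar>
         \<le> 8 * exp (- x)"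
      proof (rule layer)
        fix Sq' assume Sq': "Sq' \<in> set_pmf (branch 0 Sq)"
        have fSq': "finite Sq'" "card Sq' \<le> 2" using set_branch[OF fS(3) Sq'] fS(4) by auto
        define A where "A = insert (leaf_lin Ga) Sp'"
        define D where "D = insert (leaf_lin Gd) Sq'"
        have "card A \<le> 3" using fSp' card_insert_le[of Sp'] unfolding A_def by (simp add: card_insert_if)
        moreover have "card A \<ge> 1" using fSp' unfolding A_def by (simp add: Suc_leI card_gt_0_iff)
        ultimately have cA: "card A \<in> {1,2,3}" by auto
        have "card D \<le> 3" using fSq' card_insert_le[of Sq'] unfolding D_def by (simp add: card_insert_if)
        moreover have "card D \<ge> 1" using fSq' unfolding D_def by (simp add: Suc_leI card_gt_0_iff)
        ultimately have cD: "card D \<in> {1,2,3}" by auto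
        define R where "R = (\<lambda>Lp Lq. map_pmf the_elem (root_coal (Lp \<union> Lq)))"
        have "\<bar>pmf (branch x A \<bind> (\<lambda>Lp. branch x D \<bind> R Lp)) G - pmf (branch x A \<bind> (\<lambda>Lp. full D \<bind> R Lp)) G\<bar> \<le> 4 * exp (-x)"
          by (rule layer) (unfold full_def, rule branch_approx[OF assms cD])
        moreover have "\<bar>pmf (branch x A \<bind> (\<lambda>Lp. full D \<bind> R Lp)) G - pmf (full A \<bind> (\<lambda>Lp. full D \<bind> R Lp)) G\<bar> \<le> 4 * exp (-x)"
          unfolding full_def[of A] by (rule branch_approx[OF assms cA])
        ultimately have "\<bar>pmf (branch x A \<bind> (\<lambda>Lp. branch x D \<bind> R Lp)) G - pmf (full A \<bind> (\<lambda>Lp. full D \<bind> R Lp)) G\<bar> \<le> 8 * exp (-x)"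
          by linarith
        then show "\<bar>pmf (branch x (insert (leaf_lin Ga) Sp') \<bind> (\<lambda>Lp. branch x (insert (leaf_lin Gd) Sq') \<bind> (\<lambda>Lq. map_pmf the_elem (root_coal (Lp \<union> Lq))))) G -
         pmf (full (insert (leaf_lin Ga) Sp') \<bind> (\<lambda>Lp. full (insert (leaf_lin Gd) Sq') \<bind> (\<lambda>Lq. map_pmf the_elem (root_coal (Lp \<union> Lq))))) G\<bar>
         \<le> 8 * exp (- x)" unfolding A_def D_def R_def .
      qed
    qed
  qed
qed


lemma merge_step2:
  assumes "l1 \<noteq> l2"
  shows "merge_step {l1, l2} = return_pmf {merge_lin l1 l2}"
proof -
  define P where "P = {(a, b). a \<in> {l1,l2} \<and> b \<in> {l1,l2} \<and> a \<noteq> b}"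
  have P: "P = {(l1,l2),(l2,l1)}" using assms unfolding P_def by auto
  have "merge_step {l1,l2} = map_pmf (\<lambda>(a, b). insert (merge_lin a b) ({l1,l2} - {a, b})) (pmf_of_set P)"
    using assms unfolding merge_step_def P_def by simp
  also have "\<dots> = map_pmf (\<lambda>_. {merge_lin l1 l2}) (pmf_of_set P)"
    by (rule map_pmf_cong) (auto simp: P merge_lin_commute)
  also have "\<dots> = return_pmf {merge_lin l1 l2}" by simp
  finally show ?thesis .
qed

lemma merge_seq1:
  assumes "l1 \<noteq> l2"
  shows "merge_seq (Suc 0) {l1, l2} = return_pmf {merge_lin l1 l2}"
  using assms by (simp add: merge_step2 bind_return_pmf)

lemma pmf_merge_seq2:
  assumes "l1 \<noteq> l2" "l1 \<noteq> l3" "l2 \<noteq> l3"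
    "merge_lin l1 l2 \<noteq> l3" "merge_lin l1 l3 \<noteq> l2" "merge_lin l2 l3 \<noteq> l1"
  shows "pmf (bind_pmf (merge_seq 2 {l1, l2, l3}) K) G =
    (pmf (K {merge_lin (merge_lin l1 l2) l3}) G + pmf (K {merge_lin (merge_lin l1 l3) l2}) G
      + pmf (K {merge_lin (merge_lin l2 l3) l1}) G) / 3"
proof -
  define L where "L = {l1, l2, l3}"
  define P where "P = {(a, b). a \<in> L \<and> b \<in> L \<and> a \<noteq> b}"
  have P: "P = {(l1,l2),(l2,l1),(l1,l3),(l3,l1),(l2,l3),(l3,l2)}" using assms unfolding P_def L_def by auto
  have cL: "card L = 3" using assms unfolding L_def by simp
  define h where "h = (\<lambda>(a, b). insert (merge_lin a b) (L - {a, b}))"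
  have ms: "merge_step L = map_pmf h (pmf_of_set P)"
    using cL unfolding merge_step_def P_def h_def by (simp add: L_def)
  have "pmf (bind_pmf (merge_seq 2 L) K) G = pmf (bind_pmf (pmf_of_set P) (\<lambda>p. bind_pmf (merge_seq 1 (h p)) K)) G"
    by (simp add: numeral_2_eq_2 ms bind_map_pmf bind_assoc_pmf)
  also have "\<dots> = (\<Sum>p\<in>P. pmf (bind_pmf (merge_seq 1 (h p)) K) G) / card P"
    unfolding pmf_bind by (rule integral_pmf_of_set) (auto simp: P)
  also have "\<dots> = (pmf (K {merge_lin (merge_lin l1 l2) l3}) G + pmf (K {merge_lin (merge_lin l1 l3) l2}) G
      + pmf (K {merge_lin (merge_lin l2 l3) l1}) G) / 3"
    using assms not_sym[OF assms(4)] not_sym[OF assms(5)] not_sym[OF assms(6)] unfolding P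
    by (simp add: h_def L_def insert_Diff_if merge_step2 bind_return_pmf merge_lin_commute insert_commute)
  finally show ?thesis unfolding L_def .
qed


lemma branch2:
  assumes "T \<ge> 0" "l1 \<noteq> l2"
  shows "pmf (bind_pmf (branch T {l1, l2}) K) G
     = (1 - exp (-T)) * pmf (K {merge_lin l1 l2}) G + exp (-T) * pmf (K {l1, l2}) G"
proof -
  have a: "g_coal (Suc (Suc 0)) (Suc 0) T = 1 - exp (-T)" using g21 by (simp add: numeral_2_eq_2)
  have b: "g_coal (Suc (Suc 0)) (Suc (Suc 0)) T = exp (-T)" using g22 by (simp add: numeral_2_eq_2)
  show ?thesis using assms by (simp add: branch_bind ivs a b merge_step2 bind_return_pmf)
qed

lemma branch0_small:
  "card S \<le> 1 \<Longrightarrow> branch 0 S = return_pmf S"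
  unfolding branch_def by simp

lemma branch0_2:
  assumes "l1 \<noteq> l2"
  shows "pmf (bind_pmf (branch 0 {l1, l2}) K) G = pmf (K {l1, l2}) G"
  using branch2[OF order_refl assms] by simp

lemma full1: "full {l} = return_pmf {l}"
  unfolding full_def by simp

lemma full2: "l1 \<noteq> l2 \<Longrightarrow> full {l1, l2} = return_pmf {merge_lin l1 l2}"
  unfolding full_def by (simp add: merge_step2 bind_return_pmf)

lemma full3:
  assumes "l1 \<noteq> l2" "l1 \<noteq> l3" "l2 \<noteq> l3"
    "merge_lin l1 l2 \<noteq> l3" "merge_lin l1 l3 \<noteq> l2" "merge_lin l2 l3 \<noteq> l1"
  shows "pmf (bind_pmf (full {l1, l2, l3}) K) G =
    (pmf (K {merge_lin (merge_lin l1 l2) l3}) G + pmf (K {merge_lin (merge_lin l1 l3) l2}) G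
      + pmf (K {merge_lin (merge_lin l2 l3) l1}) G) / 3"
proof -
  have "card {l1,l2,l3} - 1 = 2" using assms by simp
  then show ?thesis unfolding full_def using pmf_merge_seq2[OF assms] by simp
qed

lemma root2: "P \<noteq> Q \<Longrightarrow> map_pmf the_elem (root_coal {P, Q}) = return_pmf (merge_lin P Q)"
  unfolding root_coal_def by (simp add: merge_step2 bind_return_pmf)

lemma split1:
  assumes "0 \<le> g" "g \<le> 1"
  shows "pmf (bind_pmf (split_ret g {l}) K) G = g * pmf (K ({l}, {})) G + (1 - g) * pmf (K ({}, {l})) G"
  unfolding split_ret_def using assms
  by (simp add: Pi_pmf_singleton bind_map_pmf pmf_bind)

lemma split2:
  assumes "0 \<le> g" "g \<le> 1" "l1 \<noteq> l2"
  shows "pmf (bind_pmf (split_ret g {l1, l2}) K) G =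
     g * g * pmf (K ({l1, l2}, {})) G + g * (1 - g) * pmf (K ({l1}, {l2})) G
   + (1 - g) * g * pmf (K ({l2}, {l1})) G + (1 - g) * (1 - g) * pmf (K ({}, {l1, l2})) G"
proof -
  have h1: "{l. l \<noteq> a \<longrightarrow> l = b} = {a, b}" for a b :: lineage by auto
  have h2: "{l. l \<noteq> a \<and> (l \<noteq> a \<longrightarrow> l = b)} = {b}" if "a \<noteq> b" for a b :: lineage using that by auto
  show ?thesis
  unfolding split_ret_def using assms not_sym[OF assms(3)]
  by (simp add: Pi_pmf_insert Pi_pmf_singleton bind_map_pmf pmf_bind pair_pmf_def bind_assoc_pmf bind_return_pmf
     algebra_simps h1 h2 insert_commute)
qed


lemma ne1: "(leaf_lin Ga) \<noteq> (leaf_lin Gb)" "(leaf_lin Gb) \<noteq> (leaf_lin Ga)"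
  by code_simp+

lemma ne2: "(leaf_lin Ga) \<noteq> (leaf_lin Gc)" "(leaf_lin Gc) \<noteq> (leaf_lin Ga)"
  by code_simp+

lemma ne3: "(leaf_lin Ga) \<noteq> (leaf_lin Gd)" "(leaf_lin Gd) \<noteq> (leaf_lin Ga)"
  by code_simp+

lemma ne4: "(leaf_lin Gb) \<noteq> (leaf_lin Gc)" "(leaf_lin Gc) \<noteq> (leaf_lin Gb)"
  by code_simp+

lemma ne5: "(leaf_lin Gb) \<noteq> (leaf_lin Gd)" "(leaf_lin Gd) \<noteq> (leaf_lin Gb)"
  by code_simp+

lemma ne6: "(leaf_lin Gc) \<noteq> (leaf_lin Gd)" "(leaf_lin Gd) \<noteq> (leaf_lin Gc)"
  by code_simp+

lemma ne7: "(leaf_lin Ga) \<noteq> (merge_lin (leaf_lin Gb) (leaf_lin Gc))" "(merge_lin (leaf_lin Gb) (leaf_lin Gc)) \<noteq> (leaf_lin Ga)"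
  by code_simp+

lemma ne8: "(leaf_lin Gd) \<noteq> (merge_lin (leaf_lin Gb) (leaf_lin Gc))" "(merge_lin (leaf_lin Gb) (leaf_lin Gc)) \<noteq> (leaf_lin Gd)"
  by code_simp+

lemma ne9: "(merge_lin (leaf_lin Ga) (leaf_lin Gb)) \<noteq> (leaf_lin Gc)" "(leaf_lin Gc) \<noteq> (merge_lin (leaf_lin Ga) (leaf_lin Gb))"
  by code_simp+

lemma ne10: "(merge_lin (leaf_lin Ga) (leaf_lin Gc)) \<noteq> (leaf_lin Gb)" "(leaf_lin Gb) \<noteq> (merge_lin (leaf_lin Ga) (leaf_lin Gc))"
  by code_simp+

lemma ne11: "(merge_lin (leaf_lin Gb) (leaf_lin Gc)) \<noteq> (leaf_lin Ga)" "(leaf_lin Ga) \<noteq> (merge_lin (leaf_lin Gb) (leaf_lin Gc))"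
  by code_simp+

lemma ne12: "(merge_lin (leaf_lin Gd) (leaf_lin Gb)) \<noteq> (leaf_lin Gc)" "(leaf_lin Gc) \<noteq> (merge_lin (leaf_lin Gd) (leaf_lin Gb))"
  by code_simp+

lemma ne13: "(merge_lin (leaf_lin Gd) (leaf_lin Gc)) \<noteq> (leaf_lin Gb)" "(leaf_lin Gb) \<noteq> (merge_lin (leaf_lin Gd) (leaf_lin Gc))"
  by code_simp+

lemma ne14: "(merge_lin (leaf_lin Gb) (leaf_lin Gc)) \<noteq> (leaf_lin Gd)" "(leaf_lin Gd) \<noteq> (merge_lin (leaf_lin Gb) (leaf_lin Gc))"
  by code_simp+

lemma ne15: "(merge_lin (leaf_lin Ga) (merge_lin (leaf_lin Gb) (leaf_lin Gc))) \<noteq> (leaf_lin Gd)" "(leaf_lin Gd) \<noteq> (merge_lin (leaf_lin Ga) (merge_lin (leaf_lin Gb) (leaf_lin Gc)))"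
  by code_simp+

lemma ne16: "(leaf_lin Ga) \<noteq> (merge_lin (leaf_lin Gd) (merge_lin (leaf_lin Gb) (leaf_lin Gc)))" "(merge_lin (leaf_lin Gd) (merge_lin (leaf_lin Gb) (leaf_lin Gc))) \<noteq> (leaf_lin Ga)"
  by code_simp+

lemma ne17: "(merge_lin (merge_lin (leaf_lin Ga) (leaf_lin Gb)) (leaf_lin Gc)) \<noteq> (leaf_lin Gd)" "(leaf_lin Gd) \<noteq> (merge_lin (merge_lin (leaf_lin Ga) (leaf_lin Gb)) (leaf_lin Gc))"
  by code_simp+

lemma ne18: "(merge_lin (merge_lin (leaf_lin Ga) (leaf_lin Gc)) (leaf_lin Gb)) \<noteq> (leaf_lin Gd)" "(leaf_lin Gd) \<noteq> (merge_lin (merge_lin (leaf_lin Ga) (leaf_lin Gc)) (leaf_lin Gb))"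
  by code_simp+

lemma ne19: "(merge_lin (merge_lin (leaf_lin Gb) (leaf_lin Gc)) (leaf_lin Ga)) \<noteq> (leaf_lin Gd)" "(leaf_lin Gd) \<noteq> (merge_lin (merge_lin (leaf_lin Gb) (leaf_lin Gc)) (leaf_lin Ga))"
  by code_simp+

lemma ne20: "(merge_lin (leaf_lin Ga) (leaf_lin Gb)) \<noteq> (merge_lin (leaf_lin Gd) (leaf_lin Gc))" "(merge_lin (leaf_lin Gd) (leaf_lin Gc)) \<noteq> (merge_lin (leaf_lin Ga) (leaf_lin Gb))"
  by code_simp+

lemma ne21: "(merge_lin (leaf_lin Ga) (leaf_lin Gc)) \<noteq> (merge_lin (leaf_lin Gd) (leaf_lin Gb))" "(merge_lin (leaf_lin Gd) (leaf_lin Gb)) \<noteq> (merge_lin (leaf_lin Ga) (leaf_lin Gc))"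
  by code_simp+

lemma ne22: "(leaf_lin Ga) \<noteq> (merge_lin (merge_lin (leaf_lin Gd) (leaf_lin Gb)) (leaf_lin Gc))" "(merge_lin (merge_lin (leaf_lin Gd) (leaf_lin Gb)) (leaf_lin Gc)) \<noteq> (leaf_lin Ga)"
  by code_simp+

lemma ne23: "(leaf_lin Ga) \<noteq> (merge_lin (merge_lin (leaf_lin Gd) (leaf_lin Gc)) (leaf_lin Gb))" "(merge_lin (merge_lin (leaf_lin Gd) (leaf_lin Gc)) (leaf_lin Gb)) \<noteq> (leaf_lin Ga)"
  by code_simp+

lemma ne24: "(leaf_lin Ga) \<noteq> (merge_lin (merge_lin (leaf_lin Gb) (leaf_lin Gc)) (leaf_lin Gd))" "(merge_lin (merge_lin (leaf_lin Gb) (leaf_lin Gc)) (leaf_lin Gd)) \<noteq> (leaf_lin Ga)"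
  by code_simp+

lemma tr1: "(merge_lin (merge_lin (leaf_lin Ga) (merge_lin (leaf_lin Gb) (leaf_lin Gc))) (leaf_lin Gd)) = T_disp1"
  by code_simp

lemma tr2: "(merge_lin (leaf_lin Gd) (merge_lin (leaf_lin Ga) (merge_lin (leaf_lin Gb) (leaf_lin Gc)))) = T_disp1"
  by code_simp

lemma tr3: "(merge_lin (merge_lin (merge_lin (leaf_lin Gb) (leaf_lin Gc)) (leaf_lin Ga)) (leaf_lin Gd)) = T_disp1"
  by code_simp

lemma tr4: "(merge_lin (leaf_lin Gd) (merge_lin (merge_lin (leaf_lin Gb) (leaf_lin Gc)) (leaf_lin Ga))) = T_disp1"
  by code_simp

lemma tr5: "(merge_lin (merge_lin (leaf_lin Ga) (merge_lin (leaf_lin Gc) (leaf_lin Gb))) (leaf_lin Gd)) = T_disp1"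
  by code_simp

lemma tr6: "(merge_lin (leaf_lin Gd) (merge_lin (leaf_lin Ga) (merge_lin (leaf_lin Gc) (leaf_lin Gb)))) = T_disp1"
  by code_simp

lemma tr7: "(merge_lin (merge_lin (merge_lin (leaf_lin Gc) (leaf_lin Gb)) (leaf_lin Ga)) (leaf_lin Gd)) = T_disp1"
  by code_simp

lemma tr8: "(merge_lin (leaf_lin Gd) (merge_lin (merge_lin (leaf_lin Gc) (leaf_lin Gb)) (leaf_lin Ga))) = T_disp1"
  by code_simp

lemma tr9: "(merge_lin (leaf_lin Ga) (merge_lin (leaf_lin Gd) (merge_lin (leaf_lin Gb) (leaf_lin Gc)))) \<noteq> T_disp1"
  by code_simp

lemma tr10: "(merge_lin (merge_lin (leaf_lin Gd) (merge_lin (leaf_lin Gb) (leaf_lin Gc))) (leaf_lin Ga)) \<noteq> T_disp1"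
  by code_simp

lemma tr11: "(merge_lin (leaf_lin Ga) (merge_lin (merge_lin (leaf_lin Gb) (leaf_lin Gc)) (leaf_lin Gd))) \<noteq> T_disp1"
  by code_simp

lemma tr12: "(merge_lin (merge_lin (merge_lin (leaf_lin Gb) (leaf_lin Gc)) (leaf_lin Gd)) (leaf_lin Ga)) \<noteq> T_disp1"
  by code_simp

lemma tr13: "(merge_lin (leaf_lin Ga) (merge_lin (leaf_lin Gd) (merge_lin (leaf_lin Gc) (leaf_lin Gb)))) \<noteq> T_disp1"
  by code_simp

lemma tr14: "(merge_lin (merge_lin (leaf_lin Gd) (merge_lin (leaf_lin Gc) (leaf_lin Gb))) (leaf_lin Ga)) \<noteq> T_disp1"
  by code_simp

lemma tr15: "(merge_lin (leaf_lin Ga) (merge_lin (merge_lin (leaf_lin Gc) (leaf_lin Gb)) (leaf_lin Gd))) \<noteq> T_disp1"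
  by code_simp

lemma tr16: "(merge_lin (merge_lin (merge_lin (leaf_lin Gc) (leaf_lin Gb)) (leaf_lin Gd)) (leaf_lin Ga)) \<noteq> T_disp1"
  by code_simp

lemma tr17: "(merge_lin (merge_lin (merge_lin (leaf_lin Ga) (leaf_lin Gb)) (leaf_lin Gc)) (leaf_lin Gd)) \<noteq> T_disp1"
  by code_simp

lemma tr18: "(merge_lin (leaf_lin Gd) (merge_lin (merge_lin (leaf_lin Ga) (leaf_lin Gb)) (leaf_lin Gc))) \<noteq> T_disp1"
  by code_simp

lemma tr19: "(merge_lin (merge_lin (leaf_lin Gc) (merge_lin (leaf_lin Ga) (leaf_lin Gb))) (leaf_lin Gd)) \<noteq> T_disp1"
  by code_simp

lemma tr20: "(merge_lin (leaf_lin Gd) (merge_lin (leaf_lin Gc) (merge_lin (leaf_lin Ga) (leaf_lin Gb)))) \<noteq> T_disp1"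
  by code_simp

lemma tr21: "(merge_lin (merge_lin (merge_lin (leaf_lin Gb) (leaf_lin Ga)) (leaf_lin Gc)) (leaf_lin Gd)) \<noteq> T_disp1"
  by code_simp

lemma tr22: "(merge_lin (leaf_lin Gd) (merge_lin (merge_lin (leaf_lin Gb) (leaf_lin Ga)) (leaf_lin Gc))) \<noteq> T_disp1"
  by code_simp

lemma tr23: "(merge_lin (merge_lin (leaf_lin Gc) (merge_lin (leaf_lin Gb) (leaf_lin Ga))) (leaf_lin Gd)) \<noteq> T_disp1"
  by code_simp

lemma tr24: "(merge_lin (leaf_lin Gd) (merge_lin (leaf_lin Gc) (merge_lin (leaf_lin Gb) (leaf_lin Ga)))) \<noteq> T_disp1"
  by code_simp

lemma tr25: "(merge_lin (merge_lin (merge_lin (leaf_lin Ga) (leaf_lin Gc)) (leaf_lin Gb)) (leaf_lin Gd)) \<noteq> T_disp1"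
  by code_simp

lemma tr26: "(merge_lin (leaf_lin Gd) (merge_lin (merge_lin (leaf_lin Ga) (leaf_lin Gc)) (leaf_lin Gb))) \<noteq> T_disp1"
  by code_simp

lemma tr27: "(merge_lin (merge_lin (leaf_lin Gb) (merge_lin (leaf_lin Ga) (leaf_lin Gc))) (leaf_lin Gd)) \<noteq> T_disp1"
  by code_simp

lemma tr28: "(merge_lin (leaf_lin Gd) (merge_lin (leaf_lin Gb) (merge_lin (leaf_lin Ga) (leaf_lin Gc)))) \<noteq> T_disp1"
  by code_simp

lemma tr29: "(merge_lin (merge_lin (merge_lin (leaf_lin Gc) (leaf_lin Ga)) (leaf_lin Gb)) (leaf_lin Gd)) \<noteq> T_disp1"
  by code_simp

lemma tr30: "(merge_lin (leaf_lin Gd) (merge_lin (merge_lin (leaf_lin Gc) (leaf_lin Ga)) (leaf_lin Gb))) \<noteq> T_disp1"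
  by code_simp

lemma tr31: "(merge_lin (merge_lin (leaf_lin Gb) (merge_lin (leaf_lin Gc) (leaf_lin Ga))) (leaf_lin Gd)) \<noteq> T_disp1"
  by code_simp

lemma tr32: "(merge_lin (leaf_lin Gd) (merge_lin (leaf_lin Gb) (merge_lin (leaf_lin Gc) (leaf_lin Ga)))) \<noteq> T_disp1"
  by code_simp

lemma tr33: "(merge_lin (merge_lin (merge_lin (leaf_lin Gb) (leaf_lin Gc)) (leaf_lin Ga)) (leaf_lin Gd)) = T_disp1"
  by code_simp

lemma tr34: "(merge_lin (leaf_lin Gd) (merge_lin (merge_lin (leaf_lin Gb) (leaf_lin Gc)) (leaf_lin Ga))) = T_disp1"
  by code_simp

lemma tr35: "(merge_lin (merge_lin (leaf_lin Ga) (merge_lin (leaf_lin Gb) (leaf_lin Gc))) (leaf_lin Gd)) = T_disp1"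
  by code_simp

lemma tr36: "(merge_lin (leaf_lin Gd) (merge_lin (leaf_lin Ga) (merge_lin (leaf_lin Gb) (leaf_lin Gc)))) = T_disp1"
  by code_simp

lemma tr37: "(merge_lin (merge_lin (merge_lin (leaf_lin Gc) (leaf_lin Gb)) (leaf_lin Ga)) (leaf_lin Gd)) = T_disp1"
  by code_simp

lemma tr38: "(merge_lin (leaf_lin Gd) (merge_lin (merge_lin (leaf_lin Gc) (leaf_lin Gb)) (leaf_lin Ga))) = T_disp1"
  by code_simp

lemma tr39: "(merge_lin (merge_lin (leaf_lin Ga) (merge_lin (leaf_lin Gc) (leaf_lin Gb))) (leaf_lin Gd)) = T_disp1"
  by code_simp

lemma tr40: "(merge_lin (leaf_lin Gd) (merge_lin (leaf_lin Ga) (merge_lin (leaf_lin Gc) (leaf_lin Gb)))) = T_disp1"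
  by code_simp

lemma tr41: "(merge_lin (merge_lin (leaf_lin Ga) (leaf_lin Gb)) (merge_lin (leaf_lin Gd) (leaf_lin Gc))) \<noteq> T_disp1"
  by code_simp

lemma tr42: "(merge_lin (merge_lin (leaf_lin Gd) (leaf_lin Gc)) (merge_lin (leaf_lin Ga) (leaf_lin Gb))) \<noteq> T_disp1"
  by code_simp

lemma tr43: "(merge_lin (merge_lin (leaf_lin Ga) (leaf_lin Gb)) (merge_lin (leaf_lin Gc) (leaf_lin Gd))) \<noteq> T_disp1"
  by code_simp

lemma tr44: "(merge_lin (merge_lin (leaf_lin Gc) (leaf_lin Gd)) (merge_lin (leaf_lin Ga) (leaf_lin Gb))) \<noteq> T_disp1"
  by code_simp

lemma tr45: "(merge_lin (merge_lin (leaf_lin Gb) (leaf_lin Ga)) (merge_lin (leaf_lin Gd) (leaf_lin Gc))) \<noteq> T_disp1"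
  by code_simp

lemma tr46: "(merge_lin (merge_lin (leaf_lin Gd) (leaf_lin Gc)) (merge_lin (leaf_lin Gb) (leaf_lin Ga))) \<noteq> T_disp1"
  by code_simp

lemma tr47: "(merge_lin (merge_lin (leaf_lin Gb) (leaf_lin Ga)) (merge_lin (leaf_lin Gc) (leaf_lin Gd))) \<noteq> T_disp1"
  by code_simp

lemma tr48: "(merge_lin (merge_lin (leaf_lin Gc) (leaf_lin Gd)) (merge_lin (leaf_lin Gb) (leaf_lin Ga))) \<noteq> T_disp1"
  by code_simp

lemma tr49: "(merge_lin (merge_lin (leaf_lin Ga) (leaf_lin Gc)) (merge_lin (leaf_lin Gd) (leaf_lin Gb))) \<noteq> T_disp1"
  by code_simp

lemma tr50: "(merge_lin (merge_lin (leaf_lin Gd) (leaf_lin Gb)) (merge_lin (leaf_lin Ga) (leaf_lin Gc))) \<noteq> T_disp1"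
  by code_simp

lemma tr51: "(merge_lin (merge_lin (leaf_lin Ga) (leaf_lin Gc)) (merge_lin (leaf_lin Gb) (leaf_lin Gd))) \<noteq> T_disp1"
  by code_simp

lemma tr52: "(merge_lin (merge_lin (leaf_lin Gb) (leaf_lin Gd)) (merge_lin (leaf_lin Ga) (leaf_lin Gc))) \<noteq> T_disp1"
  by code_simp

lemma tr53: "(merge_lin (merge_lin (leaf_lin Gc) (leaf_lin Ga)) (merge_lin (leaf_lin Gd) (leaf_lin Gb))) \<noteq> T_disp1"
  by code_simp

lemma tr54: "(merge_lin (merge_lin (leaf_lin Gd) (leaf_lin Gb)) (merge_lin (leaf_lin Gc) (leaf_lin Ga))) \<noteq> T_disp1"
  by code_simp

lemma tr55: "(merge_lin (merge_lin (leaf_lin Gc) (leaf_lin Ga)) (merge_lin (leaf_lin Gb) (leaf_lin Gd))) \<noteq> T_disp1"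
  by code_simp

lemma tr56: "(merge_lin (merge_lin (leaf_lin Gb) (leaf_lin Gd)) (merge_lin (leaf_lin Gc) (leaf_lin Ga))) \<noteq> T_disp1"
  by code_simp

lemma tr57: "(merge_lin (leaf_lin Ga) (merge_lin (merge_lin (leaf_lin Gd) (leaf_lin Gb)) (leaf_lin Gc))) \<noteq> T_disp1"
  by code_simp

lemma tr58: "(merge_lin (merge_lin (merge_lin (leaf_lin Gd) (leaf_lin Gb)) (leaf_lin Gc)) (leaf_lin Ga)) \<noteq> T_disp1"
  by code_simp

lemma tr59: "(merge_lin (leaf_lin Ga) (merge_lin (leaf_lin Gc) (merge_lin (leaf_lin Gd) (leaf_lin Gb)))) \<noteq> T_disp1"
  by code_simp

lemma tr60: "(merge_lin (merge_lin (leaf_lin Gc) (merge_lin (leaf_lin Gd) (leaf_lin Gb))) (leaf_lin Ga)) \<noteq> T_disp1"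
  by code_simp

lemma tr61: "(merge_lin (leaf_lin Ga) (merge_lin (merge_lin (leaf_lin Gb) (leaf_lin Gd)) (leaf_lin Gc))) \<noteq> T_disp1"
  by code_simp

lemma tr62: "(merge_lin (merge_lin (merge_lin (leaf_lin Gb) (leaf_lin Gd)) (leaf_lin Gc)) (leaf_lin Ga)) \<noteq> T_disp1"
  by code_simp

lemma tr63: "(merge_lin (leaf_lin Ga) (merge_lin (leaf_lin Gc) (merge_lin (leaf_lin Gb) (leaf_lin Gd)))) \<noteq> T_disp1"
  by code_simp

lemma tr64: "(merge_lin (merge_lin (leaf_lin Gc) (merge_lin (leaf_lin Gb) (leaf_lin Gd))) (leaf_lin Ga)) \<noteq> T_disp1"
  by code_simp

lemma tr65: "(merge_lin (leaf_lin Ga) (merge_lin (merge_lin (leaf_lin Gd) (leaf_lin Gc)) (leaf_lin Gb))) \<noteq> T_disp1"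
  by code_simp

lemma tr66: "(merge_lin (merge_lin (merge_lin (leaf_lin Gd) (leaf_lin Gc)) (leaf_lin Gb)) (leaf_lin Ga)) \<noteq> T_disp1"
  by code_simp

lemma tr67: "(merge_lin (leaf_lin Ga) (merge_lin (leaf_lin Gb) (merge_lin (leaf_lin Gd) (leaf_lin Gc)))) \<noteq> T_disp1"
  by code_simp

lemma tr68: "(merge_lin (merge_lin (leaf_lin Gb) (merge_lin (leaf_lin Gd) (leaf_lin Gc))) (leaf_lin Ga)) \<noteq> T_disp1"
  by code_simp

lemma tr69: "(merge_lin (leaf_lin Ga) (merge_lin (merge_lin (leaf_lin Gc) (leaf_lin Gd)) (leaf_lin Gb))) \<noteq> T_disp1"
  by code_simp

lemma tr70: "(merge_lin (merge_lin (merge_lin (leaf_lin Gc) (leaf_lin Gd)) (leaf_lin Gb)) (leaf_lin Ga)) \<noteq> T_disp1"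
  by code_simp

lemma tr71: "(merge_lin (leaf_lin Ga) (merge_lin (leaf_lin Gb) (merge_lin (leaf_lin Gc) (leaf_lin Gd)))) \<noteq> T_disp1"
  by code_simp

lemma tr72: "(merge_lin (merge_lin (leaf_lin Gb) (merge_lin (leaf_lin Gc) (leaf_lin Gd))) (leaf_lin Ga)) \<noteq> T_disp1"
  by code_simp

lemma tr73: "(merge_lin (leaf_lin Ga) (merge_lin (merge_lin (leaf_lin Gb) (leaf_lin Gc)) (leaf_lin Gd))) \<noteq> T_disp1"
  by code_simp

lemma tr74: "(merge_lin (merge_lin (merge_lin (leaf_lin Gb) (leaf_lin Gc)) (leaf_lin Gd)) (leaf_lin Ga)) \<noteq> T_disp1"
  by code_simp

lemma tr75: "(merge_lin (leaf_lin Ga) (merge_lin (leaf_lin Gd) (merge_lin (leaf_lin Gb) (leaf_lin Gc)))) \<noteq> T_disp1"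
  by code_simp

lemma tr76: "(merge_lin (merge_lin (leaf_lin Gd) (merge_lin (leaf_lin Gb) (leaf_lin Gc))) (leaf_lin Ga)) \<noteq> T_disp1"
  by code_simp

lemma tr77: "(merge_lin (leaf_lin Ga) (merge_lin (merge_lin (leaf_lin Gc) (leaf_lin Gb)) (leaf_lin Gd))) \<noteq> T_disp1"
  by code_simp

lemma tr78: "(merge_lin (merge_lin (merge_lin (leaf_lin Gc) (leaf_lin Gb)) (leaf_lin Gd)) (leaf_lin Ga)) \<noteq> T_disp1"
  by code_simp

lemma tr79: "(merge_lin (leaf_lin Ga) (merge_lin (leaf_lin Gd) (merge_lin (leaf_lin Gc) (leaf_lin Gb)))) \<noteq> T_disp1"
  by code_simp

lemma tr80: "(merge_lin (merge_lin (leaf_lin Gd) (merge_lin (leaf_lin Gc) (leaf_lin Gb))) (leaf_lin Ga)) \<noteq> T_disp1"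
  by code_simp

lemma tr81: "(merge_lin (merge_lin (leaf_lin Ga) (merge_lin (leaf_lin Gb) (leaf_lin Gc))) (leaf_lin Gd)) \<noteq> T_disp2"
  by code_simp

lemma tr82: "(merge_lin (leaf_lin Gd) (merge_lin (leaf_lin Ga) (merge_lin (leaf_lin Gb) (leaf_lin Gc)))) \<noteq> T_disp2"
  by code_simp

lemma tr83: "(merge_lin (merge_lin (merge_lin (leaf_lin Gb) (leaf_lin Gc)) (leaf_lin Ga)) (leaf_lin Gd)) \<noteq> T_disp2"
  by code_simp

lemma tr84: "(merge_lin (leaf_lin Gd) (merge_lin (merge_lin (leaf_lin Gb) (leaf_lin Gc)) (leaf_lin Ga))) \<noteq> T_disp2"
  by code_simp

lemma tr85: "(merge_lin (merge_lin (leaf_lin Ga) (merge_lin (leaf_lin Gc) (leaf_lin Gb))) (leaf_lin Gd)) \<noteq> T_disp2"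
  by code_simp

lemma tr86: "(merge_lin (leaf_lin Gd) (merge_lin (leaf_lin Ga) (merge_lin (leaf_lin Gc) (leaf_lin Gb)))) \<noteq> T_disp2"
  by code_simp

lemma tr87: "(merge_lin (merge_lin (merge_lin (leaf_lin Gc) (leaf_lin Gb)) (leaf_lin Ga)) (leaf_lin Gd)) \<noteq> T_disp2"
  by code_simp

lemma tr88: "(merge_lin (leaf_lin Gd) (merge_lin (merge_lin (leaf_lin Gc) (leaf_lin Gb)) (leaf_lin Ga))) \<noteq> T_disp2"
  by code_simp

lemma tr89: "(merge_lin (leaf_lin Ga) (merge_lin (leaf_lin Gd) (merge_lin (leaf_lin Gb) (leaf_lin Gc)))) = T_disp2"
  by code_simp

lemma tr90: "(merge_lin (merge_lin (leaf_lin Gd) (merge_lin (leaf_lin Gb) (leaf_lin Gc))) (leaf_lin Ga)) = T_disp2"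
  by code_simp

lemma tr91: "(merge_lin (leaf_lin Ga) (merge_lin (merge_lin (leaf_lin Gb) (leaf_lin Gc)) (leaf_lin Gd))) = T_disp2"
  by code_simp

lemma tr92: "(merge_lin (merge_lin (merge_lin (leaf_lin Gb) (leaf_lin Gc)) (leaf_lin Gd)) (leaf_lin Ga)) = T_disp2"
  by code_simp

lemma tr93: "(merge_lin (leaf_lin Ga) (merge_lin (leaf_lin Gd) (merge_lin (leaf_lin Gc) (leaf_lin Gb)))) = T_disp2"
  by code_simp

lemma tr94: "(merge_lin (merge_lin (leaf_lin Gd) (merge_lin (leaf_lin Gc) (leaf_lin Gb))) (leaf_lin Ga)) = T_disp2"
  by code_simp

lemma tr95: "(merge_lin (leaf_lin Ga) (merge_lin (merge_lin (leaf_lin Gc) (leaf_lin Gb)) (leaf_lin Gd))) = T_disp2"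
  by code_simp

lemma tr96: "(merge_lin (merge_lin (merge_lin (leaf_lin Gc) (leaf_lin Gb)) (leaf_lin Gd)) (leaf_lin Ga)) = T_disp2"
  by code_simp

lemma tr97: "(merge_lin (merge_lin (merge_lin (leaf_lin Ga) (leaf_lin Gb)) (leaf_lin Gc)) (leaf_lin Gd)) \<noteq> T_disp2"
  by code_simp

lemma tr98: "(merge_lin (leaf_lin Gd) (merge_lin (merge_lin (leaf_lin Ga) (leaf_lin Gb)) (leaf_lin Gc))) \<noteq> T_disp2"
  by code_simp

lemma tr99: "(merge_lin (merge_lin (leaf_lin Gc) (merge_lin (leaf_lin Ga) (leaf_lin Gb))) (leaf_lin Gd)) \<noteq> T_disp2"
  by code_simp

lemma tr100: "(merge_lin (leaf_lin Gd) (merge_lin (leaf_lin Gc) (merge_lin (leaf_lin Ga) (leaf_lin Gb)))) \<noteq> T_disp2"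
  by code_simp

lemma tr101: "(merge_lin (merge_lin (merge_lin (leaf_lin Gb) (leaf_lin Ga)) (leaf_lin Gc)) (leaf_lin Gd)) \<noteq> T_disp2"
  by code_simp

lemma tr102: "(merge_lin (leaf_lin Gd) (merge_lin (merge_lin (leaf_lin Gb) (leaf_lin Ga)) (leaf_lin Gc))) \<noteq> T_disp2"
  by code_simp

lemma tr103: "(merge_lin (merge_lin (leaf_lin Gc) (merge_lin (leaf_lin Gb) (leaf_lin Ga))) (leaf_lin Gd)) \<noteq> T_disp2"
  by code_simp

lemma tr104: "(merge_lin (leaf_lin Gd) (merge_lin (leaf_lin Gc) (merge_lin (leaf_lin Gb) (leaf_lin Ga)))) \<noteq> T_disp2"
  by code_simp

lemma tr105: "(merge_lin (merge_lin (merge_lin (leaf_lin Ga) (leaf_lin Gc)) (leaf_lin Gb)) (leaf_lin Gd)) \<noteq> T_disp2"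
  by code_simp

lemma tr106: "(merge_lin (leaf_lin Gd) (merge_lin (merge_lin (leaf_lin Ga) (leaf_lin Gc)) (leaf_lin Gb))) \<noteq> T_disp2"
  by code_simp

lemma tr107: "(merge_lin (merge_lin (leaf_lin Gb) (merge_lin (leaf_lin Ga) (leaf_lin Gc))) (leaf_lin Gd)) \<noteq> T_disp2"
  by code_simp

lemma tr108: "(merge_lin (leaf_lin Gd) (merge_lin (leaf_lin Gb) (merge_lin (leaf_lin Ga) (leaf_lin Gc)))) \<noteq> T_disp2"
  by code_simp

lemma tr109: "(merge_lin (merge_lin (merge_lin (leaf_lin Gc) (leaf_lin Ga)) (leaf_lin Gb)) (leaf_lin Gd)) \<noteq> T_disp2"
  by code_simp

lemma tr110: "(merge_lin (leaf_lin Gd) (merge_lin (merge_lin (leaf_lin Gc) (leaf_lin Ga)) (leaf_lin Gb))) \<noteq> T_disp2"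
  by code_simp

lemma tr111: "(merge_lin (merge_lin (leaf_lin Gb) (merge_lin (leaf_lin Gc) (leaf_lin Ga))) (leaf_lin Gd)) \<noteq> T_disp2"
  by code_simp

lemma tr112: "(merge_lin (leaf_lin Gd) (merge_lin (leaf_lin Gb) (merge_lin (leaf_lin Gc) (leaf_lin Ga)))) \<noteq> T_disp2"
  by code_simp

lemma tr113: "(merge_lin (merge_lin (merge_lin (leaf_lin Gb) (leaf_lin Gc)) (leaf_lin Ga)) (leaf_lin Gd)) \<noteq> T_disp2"
  by code_simp

lemma tr114: "(merge_lin (leaf_lin Gd) (merge_lin (merge_lin (leaf_lin Gb) (leaf_lin Gc)) (leaf_lin Ga))) \<noteq> T_disp2"
  by code_simp

lemma tr115: "(merge_lin (merge_lin (leaf_lin Ga) (merge_lin (leaf_lin Gb) (leaf_lin Gc))) (leaf_lin Gd)) \<noteq> T_disp2"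
  by code_simp

lemma tr116: "(merge_lin (leaf_lin Gd) (merge_lin (leaf_lin Ga) (merge_lin (leaf_lin Gb) (leaf_lin Gc)))) \<noteq> T_disp2"
  by code_simp

lemma tr117: "(merge_lin (merge_lin (merge_lin (leaf_lin Gc) (leaf_lin Gb)) (leaf_lin Ga)) (leaf_lin Gd)) \<noteq> T_disp2"
  by code_simp

lemma tr118: "(merge_lin (leaf_lin Gd) (merge_lin (merge_lin (leaf_lin Gc) (leaf_lin Gb)) (leaf_lin Ga))) \<noteq> T_disp2"
  by code_simp

lemma tr119: "(merge_lin (merge_lin (leaf_lin Ga) (merge_lin (leaf_lin Gc) (leaf_lin Gb))) (leaf_lin Gd)) \<noteq> T_disp2"
  by code_simp

lemma tr120: "(merge_lin (leaf_lin Gd) (merge_lin (leaf_lin Ga) (merge_lin (leaf_lin Gc) (leaf_lin Gb)))) \<noteq> T_disp2"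
  by code_simp

lemma tr121: "(merge_lin (merge_lin (leaf_lin Ga) (leaf_lin Gb)) (merge_lin (leaf_lin Gd) (leaf_lin Gc))) \<noteq> T_disp2"
  by code_simp

lemma tr122: "(merge_lin (merge_lin (leaf_lin Gd) (leaf_lin Gc)) (merge_lin (leaf_lin Ga) (leaf_lin Gb))) \<noteq> T_disp2"
  by code_simp

lemma tr123: "(merge_lin (merge_lin (leaf_lin Ga) (leaf_lin Gb)) (merge_lin (leaf_lin Gc) (leaf_lin Gd))) \<noteq> T_disp2"
  by code_simp

lemma tr124: "(merge_lin (merge_lin (leaf_lin Gc) (leaf_lin Gd)) (merge_lin (leaf_lin Ga) (leaf_lin Gb))) \<noteq> T_disp2"
  by code_simp

lemma tr125: "(merge_lin (merge_lin (leaf_lin Gb) (leaf_lin Ga)) (merge_lin (leaf_lin Gd) (leaf_lin Gc))) \<noteq> T_disp2"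
  by code_simp

lemma tr126: "(merge_lin (merge_lin (leaf_lin Gd) (leaf_lin Gc)) (merge_lin (leaf_lin Gb) (leaf_lin Ga))) \<noteq> T_disp2"
  by code_simp

lemma tr127: "(merge_lin (merge_lin (leaf_lin Gb) (leaf_lin Ga)) (merge_lin (leaf_lin Gc) (leaf_lin Gd))) \<noteq> T_disp2"
  by code_simp

lemma tr128: "(merge_lin (merge_lin (leaf_lin Gc) (leaf_lin Gd)) (merge_lin (leaf_lin Gb) (leaf_lin Ga))) \<noteq> T_disp2"
  by code_simp

lemma tr129: "(merge_lin (merge_lin (leaf_lin Ga) (leaf_lin Gc)) (merge_lin (leaf_lin Gd) (leaf_lin Gb))) \<noteq> T_disp2"
  by code_simp

lemma tr130: "(merge_lin (merge_lin (leaf_lin Gd) (leaf_lin Gb)) (merge_lin (leaf_lin Ga) (leaf_lin Gc))) \<noteq> T_disp2"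
  by code_simp

lemma tr131: "(merge_lin (merge_lin (leaf_lin Ga) (leaf_lin Gc)) (merge_lin (leaf_lin Gb) (leaf_lin Gd))) \<noteq> T_disp2"
  by code_simp

lemma tr132: "(merge_lin (merge_lin (leaf_lin Gb) (leaf_lin Gd)) (merge_lin (leaf_lin Ga) (leaf_lin Gc))) \<noteq> T_disp2"
  by code_simp

lemma tr133: "(merge_lin (merge_lin (leaf_lin Gc) (leaf_lin Ga)) (merge_lin (leaf_lin Gd) (leaf_lin Gb))) \<noteq> T_disp2"
  by code_simp

lemma tr134: "(merge_lin (merge_lin (leaf_lin Gd) (leaf_lin Gb)) (merge_lin (leaf_lin Gc) (leaf_lin Ga))) \<noteq> T_disp2"
  by code_simp

lemma tr135: "(merge_lin (merge_lin (leaf_lin Gc) (leaf_lin Ga)) (merge_lin (leaf_lin Gb) (leaf_lin Gd))) \<noteq> T_disp2"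
  by code_simp

lemma tr136: "(merge_lin (merge_lin (leaf_lin Gb) (leaf_lin Gd)) (merge_lin (leaf_lin Gc) (leaf_lin Ga))) \<noteq> T_disp2"
  by code_simp

lemma tr137: "(merge_lin (leaf_lin Ga) (merge_lin (merge_lin (leaf_lin Gd) (leaf_lin Gb)) (leaf_lin Gc))) \<noteq> T_disp2"
  by code_simp

lemma tr138: "(merge_lin (merge_lin (merge_lin (leaf_lin Gd) (leaf_lin Gb)) (leaf_lin Gc)) (leaf_lin Ga)) \<noteq> T_disp2"
  by code_simp

lemma tr139: "(merge_lin (leaf_lin Ga) (merge_lin (leaf_lin Gc) (merge_lin (leaf_lin Gd) (leaf_lin Gb)))) \<noteq> T_disp2"
  by code_simp

lemma tr140: "(merge_lin (merge_lin (leaf_lin Gc) (merge_lin (leaf_lin Gd) (leaf_lin Gb))) (leaf_lin Ga)) \<noteq> T_disp2"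
  by code_simp

lemma tr141: "(merge_lin (leaf_lin Ga) (merge_lin (merge_lin (leaf_lin Gb) (leaf_lin Gd)) (leaf_lin Gc))) \<noteq> T_disp2"
  by code_simp

lemma tr142: "(merge_lin (merge_lin (merge_lin (leaf_lin Gb) (leaf_lin Gd)) (leaf_lin Gc)) (leaf_lin Ga)) \<noteq> T_disp2"
  by code_simp

lemma tr143: "(merge_lin (leaf_lin Ga) (merge_lin (leaf_lin Gc) (merge_lin (leaf_lin Gb) (leaf_lin Gd)))) \<noteq> T_disp2"
  by code_simp

lemma tr144: "(merge_lin (merge_lin (leaf_lin Gc) (merge_lin (leaf_lin Gb) (leaf_lin Gd))) (leaf_lin Ga)) \<noteq> T_disp2"
  by code_simp

lemma tr145: "(merge_lin (leaf_lin Ga) (merge_lin (merge_lin (leaf_lin Gd) (leaf_lin Gc)) (leaf_lin Gb))) \<noteq> T_disp2"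
  by code_simp

lemma tr146: "(merge_lin (merge_lin (merge_lin (leaf_lin Gd) (leaf_lin Gc)) (leaf_lin Gb)) (leaf_lin Ga)) \<noteq> T_disp2"
  by code_simp

lemma tr147: "(merge_lin (leaf_lin Ga) (merge_lin (leaf_lin Gb) (merge_lin (leaf_lin Gd) (leaf_lin Gc)))) \<noteq> T_disp2"
  by code_simp

lemma tr148: "(merge_lin (merge_lin (leaf_lin Gb) (merge_lin (leaf_lin Gd) (leaf_lin Gc))) (leaf_lin Ga)) \<noteq> T_disp2"
  by code_simp

lemma tr149: "(merge_lin (leaf_lin Ga) (merge_lin (merge_lin (leaf_lin Gc) (leaf_lin Gd)) (leaf_lin Gb))) \<noteq> T_disp2"
  by code_simp

lemma tr150: "(merge_lin (merge_lin (merge_lin (leaf_lin Gc) (leaf_lin Gd)) (leaf_lin Gb)) (leaf_lin Ga)) \<noteq> T_disp2"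
  by code_simp

lemma tr151: "(merge_lin (leaf_lin Ga) (merge_lin (leaf_lin Gb) (merge_lin (leaf_lin Gc) (leaf_lin Gd)))) \<noteq> T_disp2"
  by code_simp

lemma tr152: "(merge_lin (merge_lin (leaf_lin Gb) (merge_lin (leaf_lin Gc) (leaf_lin Gd))) (leaf_lin Ga)) \<noteq> T_disp2"
  by code_simp

lemma tr153: "(merge_lin (leaf_lin Ga) (merge_lin (merge_lin (leaf_lin Gb) (leaf_lin Gc)) (leaf_lin Gd))) = T_disp2"
  by code_simp

lemma tr154: "(merge_lin (merge_lin (merge_lin (leaf_lin Gb) (leaf_lin Gc)) (leaf_lin Gd)) (leaf_lin Ga)) = T_disp2"
  by code_simp

lemma tr155: "(merge_lin (leaf_lin Ga) (merge_lin (leaf_lin Gd) (merge_lin (leaf_lin Gb) (leaf_lin Gc)))) = T_disp2"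
  by code_simp

lemma tr156: "(merge_lin (merge_lin (leaf_lin Gd) (merge_lin (leaf_lin Gb) (leaf_lin Gc))) (leaf_lin Ga)) = T_disp2"
  by code_simp

lemma tr157: "(merge_lin (leaf_lin Ga) (merge_lin (merge_lin (leaf_lin Gc) (leaf_lin Gb)) (leaf_lin Gd))) = T_disp2"
  by code_simp

lemma tr158: "(merge_lin (merge_lin (merge_lin (leaf_lin Gc) (leaf_lin Gb)) (leaf_lin Gd)) (leaf_lin Ga)) = T_disp2"
  by code_simp

lemma tr159: "(merge_lin (leaf_lin Ga) (merge_lin (leaf_lin Gd) (merge_lin (leaf_lin Gc) (leaf_lin Gb)))) = T_disp2"
  by code_simp

lemma tr160: "(merge_lin (merge_lin (leaf_lin Gd) (merge_lin (leaf_lin Gc) (leaf_lin Gb))) (leaf_lin Ga)) = T_disp2"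
  by code_simp

lemma tr161: "(merge_lin (merge_lin (leaf_lin Ga) (merge_lin (leaf_lin Gb) (leaf_lin Gc))) (leaf_lin Gd)) \<noteq> T_ab_cd"
  by code_simp

lemma tr162: "(merge_lin (leaf_lin Gd) (merge_lin (leaf_lin Ga) (merge_lin (leaf_lin Gb) (leaf_lin Gc)))) \<noteq> T_ab_cd"
  by code_simp

lemma tr163: "(merge_lin (merge_lin (merge_lin (leaf_lin Gb) (leaf_lin Gc)) (leaf_lin Ga)) (leaf_lin Gd)) \<noteq> T_ab_cd"
  by code_simp

lemma tr164: "(merge_lin (leaf_lin Gd) (merge_lin (merge_lin (leaf_lin Gb) (leaf_lin Gc)) (leaf_lin Ga))) \<noteq> T_ab_cd"
  by code_simp

lemma tr165: "(merge_lin (merge_lin (leaf_lin Ga) (merge_lin (leaf_lin Gc) (leaf_lin Gb))) (leaf_lin Gd)) \<noteq> T_ab_cd"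
  by code_simp

lemma tr166: "(merge_lin (leaf_lin Gd) (merge_lin (leaf_lin Ga) (merge_lin (leaf_lin Gc) (leaf_lin Gb)))) \<noteq> T_ab_cd"
  by code_simp

lemma tr167: "(merge_lin (merge_lin (merge_lin (leaf_lin Gc) (leaf_lin Gb)) (leaf_lin Ga)) (leaf_lin Gd)) \<noteq> T_ab_cd"
  by code_simp

lemma tr168: "(merge_lin (leaf_lin Gd) (merge_lin (merge_lin (leaf_lin Gc) (leaf_lin Gb)) (leaf_lin Ga))) \<noteq> T_ab_cd"
  by code_simp

lemma tr169: "(merge_lin (leaf_lin Ga) (merge_lin (leaf_lin Gd) (merge_lin (leaf_lin Gb) (leaf_lin Gc)))) \<noteq> T_ab_cd"
  by code_simp

lemma tr170: "(merge_lin (merge_lin (leaf_lin Gd) (merge_lin (leaf_lin Gb) (leaf_lin Gc))) (leaf_lin Ga)) \<noteq> T_ab_cd"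
  by code_simp

lemma tr171: "(merge_lin (leaf_lin Ga) (merge_lin (merge_lin (leaf_lin Gb) (leaf_lin Gc)) (leaf_lin Gd))) \<noteq> T_ab_cd"
  by code_simp

lemma tr172: "(merge_lin (merge_lin (merge_lin (leaf_lin Gb) (leaf_lin Gc)) (leaf_lin Gd)) (leaf_lin Ga)) \<noteq> T_ab_cd"
  by code_simp

lemma tr173: "(merge_lin (leaf_lin Ga) (merge_lin (leaf_lin Gd) (merge_lin (leaf_lin Gc) (leaf_lin Gb)))) \<noteq> T_ab_cd"
  by code_simp

lemma tr174: "(merge_lin (merge_lin (leaf_lin Gd) (merge_lin (leaf_lin Gc) (leaf_lin Gb))) (leaf_lin Ga)) \<noteq> T_ab_cd"
  by code_simp

lemma tr175: "(merge_lin (leaf_lin Ga) (merge_lin (merge_lin (leaf_lin Gc) (leaf_lin Gb)) (leaf_lin Gd))) \<noteq> T_ab_cd"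
  by code_simp

lemma tr176: "(merge_lin (merge_lin (merge_lin (leaf_lin Gc) (leaf_lin Gb)) (leaf_lin Gd)) (leaf_lin Ga)) \<noteq> T_ab_cd"
  by code_simp

lemma tr177: "(merge_lin (merge_lin (merge_lin (leaf_lin Ga) (leaf_lin Gb)) (leaf_lin Gc)) (leaf_lin Gd)) \<noteq> T_ab_cd"
  by code_simp

lemma tr178: "(merge_lin (leaf_lin Gd) (merge_lin (merge_lin (leaf_lin Ga) (leaf_lin Gb)) (leaf_lin Gc))) \<noteq> T_ab_cd"
  by code_simp

lemma tr179: "(merge_lin (merge_lin (leaf_lin Gc) (merge_lin (leaf_lin Ga) (leaf_lin Gb))) (leaf_lin Gd)) \<noteq> T_ab_cd"
  by code_simp

lemma tr180: "(merge_lin (leaf_lin Gd) (merge_lin (leaf_lin Gc) (merge_lin (leaf_lin Ga) (leaf_lin Gb)))) \<noteq> T_ab_cd"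
  by code_simp

lemma tr181: "(merge_lin (merge_lin (merge_lin (leaf_lin Gb) (leaf_lin Ga)) (leaf_lin Gc)) (leaf_lin Gd)) \<noteq> T_ab_cd"
  by code_simp

lemma tr182: "(merge_lin (leaf_lin Gd) (merge_lin (merge_lin (leaf_lin Gb) (leaf_lin Ga)) (leaf_lin Gc))) \<noteq> T_ab_cd"
  by code_simp

lemma tr183: "(merge_lin (merge_lin (leaf_lin Gc) (merge_lin (leaf_lin Gb) (leaf_lin Ga))) (leaf_lin Gd)) \<noteq> T_ab_cd"
  by code_simp

lemma tr184: "(merge_lin (leaf_lin Gd) (merge_lin (leaf_lin Gc) (merge_lin (leaf_lin Gb) (leaf_lin Ga)))) \<noteq> T_ab_cd"
  by code_simp

lemma tr185: "(merge_lin (merge_lin (merge_lin (leaf_lin Ga) (leaf_lin Gc)) (leaf_lin Gb)) (leaf_lin Gd)) \<noteq> T_ab_cd"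
  by code_simp

lemma tr186: "(merge_lin (leaf_lin Gd) (merge_lin (merge_lin (leaf_lin Ga) (leaf_lin Gc)) (leaf_lin Gb))) \<noteq> T_ab_cd"
  by code_simp

lemma tr187: "(merge_lin (merge_lin (leaf_lin Gb) (merge_lin (leaf_lin Ga) (leaf_lin Gc))) (leaf_lin Gd)) \<noteq> T_ab_cd"
  by code_simp

lemma tr188: "(merge_lin (leaf_lin Gd) (merge_lin (leaf_lin Gb) (merge_lin (leaf_lin Ga) (leaf_lin Gc)))) \<noteq> T_ab_cd"
  by code_simp

lemma tr189: "(merge_lin (merge_lin (merge_lin (leaf_lin Gc) (leaf_lin Ga)) (leaf_lin Gb)) (leaf_lin Gd)) \<noteq> T_ab_cd"
  by code_simp

lemma tr190: "(merge_lin (leaf_lin Gd) (merge_lin (merge_lin (leaf_lin Gc) (leaf_lin Ga)) (leaf_lin Gb))) \<noteq> T_ab_cd"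
  by code_simp

lemma tr191: "(merge_lin (merge_lin (leaf_lin Gb) (merge_lin (leaf_lin Gc) (leaf_lin Ga))) (leaf_lin Gd)) \<noteq> T_ab_cd"
  by code_simp

lemma tr192: "(merge_lin (leaf_lin Gd) (merge_lin (leaf_lin Gb) (merge_lin (leaf_lin Gc) (leaf_lin Ga)))) \<noteq> T_ab_cd"
  by code_simp

lemma tr193: "(merge_lin (merge_lin (merge_lin (leaf_lin Gb) (leaf_lin Gc)) (leaf_lin Ga)) (leaf_lin Gd)) \<noteq> T_ab_cd"
  by code_simp

lemma tr194: "(merge_lin (leaf_lin Gd) (merge_lin (merge_lin (leaf_lin Gb) (leaf_lin Gc)) (leaf_lin Ga))) \<noteq> T_ab_cd"
  by code_simp

lemma tr195: "(merge_lin (merge_lin (leaf_lin Ga) (merge_lin (leaf_lin Gb) (leaf_lin Gc))) (leaf_lin Gd)) \<noteq> T_ab_cd"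
  by code_simp

lemma tr196: "(merge_lin (leaf_lin Gd) (merge_lin (leaf_lin Ga) (merge_lin (leaf_lin Gb) (leaf_lin Gc)))) \<noteq> T_ab_cd"
  by code_simp

lemma tr197: "(merge_lin (merge_lin (merge_lin (leaf_lin Gc) (leaf_lin Gb)) (leaf_lin Ga)) (leaf_lin Gd)) \<noteq> T_ab_cd"
  by code_simp

lemma tr198: "(merge_lin (leaf_lin Gd) (merge_lin (merge_lin (leaf_lin Gc) (leaf_lin Gb)) (leaf_lin Ga))) \<noteq> T_ab_cd"
  by code_simp

lemma tr199: "(merge_lin (merge_lin (leaf_lin Ga) (merge_lin (leaf_lin Gc) (leaf_lin Gb))) (leaf_lin Gd)) \<noteq> T_ab_cd"
  by code_simp

lemma tr200: "(merge_lin (leaf_lin Gd) (merge_lin (leaf_lin Ga) (merge_lin (leaf_lin Gc) (leaf_lin Gb)))) \<noteq> T_ab_cd"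
  by code_simp

lemma tr201: "(merge_lin (merge_lin (leaf_lin Ga) (leaf_lin Gb)) (merge_lin (leaf_lin Gd) (leaf_lin Gc))) = T_ab_cd"
  by code_simp

lemma tr202: "(merge_lin (merge_lin (leaf_lin Gd) (leaf_lin Gc)) (merge_lin (leaf_lin Ga) (leaf_lin Gb))) = T_ab_cd"
  by code_simp

lemma tr203: "(merge_lin (merge_lin (leaf_lin Ga) (leaf_lin Gb)) (merge_lin (leaf_lin Gc) (leaf_lin Gd))) = T_ab_cd"
  by code_simp

lemma tr204: "(merge_lin (merge_lin (leaf_lin Gc) (leaf_lin Gd)) (merge_lin (leaf_lin Ga) (leaf_lin Gb))) = T_ab_cd"
  by code_simp

lemma tr205: "(merge_lin (merge_lin (leaf_lin Gb) (leaf_lin Ga)) (merge_lin (leaf_lin Gd) (leaf_lin Gc))) = T_ab_cd"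
  by code_simp

lemma tr206: "(merge_lin (merge_lin (leaf_lin Gd) (leaf_lin Gc)) (merge_lin (leaf_lin Gb) (leaf_lin Ga))) = T_ab_cd"
  by code_simp

lemma tr207: "(merge_lin (merge_lin (leaf_lin Gb) (leaf_lin Ga)) (merge_lin (leaf_lin Gc) (leaf_lin Gd))) = T_ab_cd"
  by code_simp

lemma tr208: "(merge_lin (merge_lin (leaf_lin Gc) (leaf_lin Gd)) (merge_lin (leaf_lin Gb) (leaf_lin Ga))) = T_ab_cd"
  by code_simp

lemma tr209: "(merge_lin (merge_lin (leaf_lin Ga) (leaf_lin Gc)) (merge_lin (leaf_lin Gd) (leaf_lin Gb))) \<noteq> T_ab_cd"
  by code_simp

lemma tr210: "(merge_lin (merge_lin (leaf_lin Gd) (leaf_lin Gb)) (merge_lin (leaf_lin Ga) (leaf_lin Gc))) \<noteq> T_ab_cd"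
  by code_simp

lemma tr211: "(merge_lin (merge_lin (leaf_lin Ga) (leaf_lin Gc)) (merge_lin (leaf_lin Gb) (leaf_lin Gd))) \<noteq> T_ab_cd"
  by code_simp

lemma tr212: "(merge_lin (merge_lin (leaf_lin Gb) (leaf_lin Gd)) (merge_lin (leaf_lin Ga) (leaf_lin Gc))) \<noteq> T_ab_cd"
  by code_simp

lemma tr213: "(merge_lin (merge_lin (leaf_lin Gc) (leaf_lin Ga)) (merge_lin (leaf_lin Gd) (leaf_lin Gb))) \<noteq> T_ab_cd"
  by code_simp

lemma tr214: "(merge_lin (merge_lin (leaf_lin Gd) (leaf_lin Gb)) (merge_lin (leaf_lin Gc) (leaf_lin Ga))) \<noteq> T_ab_cd"
  by code_simp

lemma tr215: "(merge_lin (merge_lin (leaf_lin Gc) (leaf_lin Ga)) (merge_lin (leaf_lin Gb) (leaf_lin Gd))) \<noteq> T_ab_cd"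
  by code_simp

lemma tr216: "(merge_lin (merge_lin (leaf_lin Gb) (leaf_lin Gd)) (merge_lin (leaf_lin Gc) (leaf_lin Ga))) \<noteq> T_ab_cd"
  by code_simp

lemma tr217: "(merge_lin (leaf_lin Ga) (merge_lin (merge_lin (leaf_lin Gd) (leaf_lin Gb)) (leaf_lin Gc))) \<noteq> T_ab_cd"
  by code_simp

lemma tr218: "(merge_lin (merge_lin (merge_lin (leaf_lin Gd) (leaf_lin Gb)) (leaf_lin Gc)) (leaf_lin Ga)) \<noteq> T_ab_cd"
  by code_simp

lemma tr219: "(merge_lin (leaf_lin Ga) (merge_lin (leaf_lin Gc) (merge_lin (leaf_lin Gd) (leaf_lin Gb)))) \<noteq> T_ab_cd"
  by code_simp

lemma tr220: "(merge_lin (merge_lin (leaf_lin Gc) (merge_lin (leaf_lin Gd) (leaf_lin Gb))) (leaf_lin Ga)) \<noteq> T_ab_cd"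
  by code_simp

lemma tr221: "(merge_lin (leaf_lin Ga) (merge_lin (merge_lin (leaf_lin Gb) (leaf_lin Gd)) (leaf_lin Gc))) \<noteq> T_ab_cd"
  by code_simp

lemma tr222: "(merge_lin (merge_lin (merge_lin (leaf_lin Gb) (leaf_lin Gd)) (leaf_lin Gc)) (leaf_lin Ga)) \<noteq> T_ab_cd"
  by code_simp

lemma tr223: "(merge_lin (leaf_lin Ga) (merge_lin (leaf_lin Gc) (merge_lin (leaf_lin Gb) (leaf_lin Gd)))) \<noteq> T_ab_cd"
  by code_simp

lemma tr224: "(merge_lin (merge_lin (leaf_lin Gc) (merge_lin (leaf_lin Gb) (leaf_lin Gd))) (leaf_lin Ga)) \<noteq> T_ab_cd"
  by code_simp

lemma tr225: "(merge_lin (leaf_lin Ga) (merge_lin (merge_lin (leaf_lin Gd) (leaf_lin Gc)) (leaf_lin Gb))) \<noteq> T_ab_cd"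
  by code_simp

lemma tr226: "(merge_lin (merge_lin (merge_lin (leaf_lin Gd) (leaf_lin Gc)) (leaf_lin Gb)) (leaf_lin Ga)) \<noteq> T_ab_cd"
  by code_simp

lemma tr227: "(merge_lin (leaf_lin Ga) (merge_lin (leaf_lin Gb) (merge_lin (leaf_lin Gd) (leaf_lin Gc)))) \<noteq> T_ab_cd"
  by code_simp

lemma tr228: "(merge_lin (merge_lin (leaf_lin Gb) (merge_lin (leaf_lin Gd) (leaf_lin Gc))) (leaf_lin Ga)) \<noteq> T_ab_cd"
  by code_simp

lemma tr229: "(merge_lin (leaf_lin Ga) (merge_lin (merge_lin (leaf_lin Gc) (leaf_lin Gd)) (leaf_lin Gb))) \<noteq> T_ab_cd"
  by code_simp

lemma tr230: "(merge_lin (merge_lin (merge_lin (leaf_lin Gc) (leaf_lin Gd)) (leaf_lin Gb)) (leaf_lin Ga)) \<noteq> T_ab_cd"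
  by code_simp

lemma tr231: "(merge_lin (leaf_lin Ga) (merge_lin (leaf_lin Gb) (merge_lin (leaf_lin Gc) (leaf_lin Gd)))) \<noteq> T_ab_cd"
  by code_simp

lemma tr232: "(merge_lin (merge_lin (leaf_lin Gb) (merge_lin (leaf_lin Gc) (leaf_lin Gd))) (leaf_lin Ga)) \<noteq> T_ab_cd"
  by code_simp

lemma tr233: "(merge_lin (leaf_lin Ga) (merge_lin (merge_lin (leaf_lin Gb) (leaf_lin Gc)) (leaf_lin Gd))) \<noteq> T_ab_cd"
  by code_simp

lemma tr234: "(merge_lin (merge_lin (merge_lin (leaf_lin Gb) (leaf_lin Gc)) (leaf_lin Gd)) (leaf_lin Ga)) \<noteq> T_ab_cd"
  by code_simp

lemma tr235: "(merge_lin (leaf_lin Ga) (merge_lin (leaf_lin Gd) (merge_lin (leaf_lin Gb) (leaf_lin Gc)))) \<noteq> T_ab_cd"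
  by code_simp

lemma tr236: "(merge_lin (merge_lin (leaf_lin Gd) (merge_lin (leaf_lin Gb) (leaf_lin Gc))) (leaf_lin Ga)) \<noteq> T_ab_cd"
  by code_simp

lemma tr237: "(merge_lin (leaf_lin Ga) (merge_lin (merge_lin (leaf_lin Gc) (leaf_lin Gb)) (leaf_lin Gd))) \<noteq> T_ab_cd"
  by code_simp

lemma tr238: "(merge_lin (merge_lin (merge_lin (leaf_lin Gc) (leaf_lin Gb)) (leaf_lin Gd)) (leaf_lin Ga)) \<noteq> T_ab_cd"
  by code_simp

lemma tr239: "(merge_lin (leaf_lin Ga) (merge_lin (leaf_lin Gd) (merge_lin (leaf_lin Gc) (leaf_lin Gb)))) \<noteq> T_ab_cd"
  by code_simp

lemma tr240: "(merge_lin (merge_lin (leaf_lin Gd) (merge_lin (leaf_lin Gc) (leaf_lin Gb))) (leaf_lin Ga)) \<noteq> T_ab_cd"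
  by code_simp

lemma tr241: "(merge_lin (merge_lin (leaf_lin Ga) (merge_lin (leaf_lin Gb) (leaf_lin Gc))) (leaf_lin Gd)) \<noteq> T_ac_bd"
  by code_simp

lemma tr242: "(merge_lin (leaf_lin Gd) (merge_lin (leaf_lin Ga) (merge_lin (leaf_lin Gb) (leaf_lin Gc)))) \<noteq> T_ac_bd"
  by code_simp

lemma tr243: "(merge_lin (merge_lin (merge_lin (leaf_lin Gb) (leaf_lin Gc)) (leaf_lin Ga)) (leaf_lin Gd)) \<noteq> T_ac_bd"
  by code_simp

lemma tr244: "(merge_lin (leaf_lin Gd) (merge_lin (merge_lin (leaf_lin Gb) (leaf_lin Gc)) (leaf_lin Ga))) \<noteq> T_ac_bd"
  by code_simp

lemma tr245: "(merge_lin (merge_lin (leaf_lin Ga) (merge_lin (leaf_lin Gc) (leaf_lin Gb))) (leaf_lin Gd)) \<noteq> T_ac_bd"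
  by code_simp

lemma tr246: "(merge_lin (leaf_lin Gd) (merge_lin (leaf_lin Ga) (merge_lin (leaf_lin Gc) (leaf_lin Gb)))) \<noteq> T_ac_bd"
  by code_simp

lemma tr247: "(merge_lin (merge_lin (merge_lin (leaf_lin Gc) (leaf_lin Gb)) (leaf_lin Ga)) (leaf_lin Gd)) \<noteq> T_ac_bd"
  by code_simp

lemma tr248: "(merge_lin (leaf_lin Gd) (merge_lin (merge_lin (leaf_lin Gc) (leaf_lin Gb)) (leaf_lin Ga))) \<noteq> T_ac_bd"
  by code_simp

lemma tr249: "(merge_lin (leaf_lin Ga) (merge_lin (leaf_lin Gd) (merge_lin (leaf_lin Gb) (leaf_lin Gc)))) \<noteq> T_ac_bd"
  by code_simp

lemma tr250: "(merge_lin (merge_lin (leaf_lin Gd) (merge_lin (leaf_lin Gb) (leaf_lin Gc))) (leaf_lin Ga)) \<noteq> T_ac_bd"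
  by code_simp

lemma tr251: "(merge_lin (leaf_lin Ga) (merge_lin (merge_lin (leaf_lin Gb) (leaf_lin Gc)) (leaf_lin Gd))) \<noteq> T_ac_bd"
  by code_simp

lemma tr252: "(merge_lin (merge_lin (merge_lin (leaf_lin Gb) (leaf_lin Gc)) (leaf_lin Gd)) (leaf_lin Ga)) \<noteq> T_ac_bd"
  by code_simp

lemma tr253: "(merge_lin (leaf_lin Ga) (merge_lin (leaf_lin Gd) (merge_lin (leaf_lin Gc) (leaf_lin Gb)))) \<noteq> T_ac_bd"
  by code_simp

lemma tr254: "(merge_lin (merge_lin (leaf_lin Gd) (merge_lin (leaf_lin Gc) (leaf_lin Gb))) (leaf_lin Ga)) \<noteq> T_ac_bd"
  by code_simp

lemma tr255: "(merge_lin (leaf_lin Ga) (merge_lin (merge_lin (leaf_lin Gc) (leaf_lin Gb)) (leaf_lin Gd))) \<noteq> T_ac_bd"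
  by code_simp

lemma tr256: "(merge_lin (merge_lin (merge_lin (leaf_lin Gc) (leaf_lin Gb)) (leaf_lin Gd)) (leaf_lin Ga)) \<noteq> T_ac_bd"
  by code_simp

lemma tr257: "(merge_lin (merge_lin (merge_lin (leaf_lin Ga) (leaf_lin Gb)) (leaf_lin Gc)) (leaf_lin Gd)) \<noteq> T_ac_bd"
  by code_simp

lemma tr258: "(merge_lin (leaf_lin Gd) (merge_lin (merge_lin (leaf_lin Ga) (leaf_lin Gb)) (leaf_lin Gc))) \<noteq> T_ac_bd"
  by code_simp

lemma tr259: "(merge_lin (merge_lin (leaf_lin Gc) (merge_lin (leaf_lin Ga) (leaf_lin Gb))) (leaf_lin Gd)) \<noteq> T_ac_bd"
  by code_simp

lemma tr260: "(merge_lin (leaf_lin Gd) (merge_lin (leaf_lin Gc) (merge_lin (leaf_lin Ga) (leaf_lin Gb)))) \<noteq> T_ac_bd"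
  by code_simp

lemma tr261: "(merge_lin (merge_lin (merge_lin (leaf_lin Gb) (leaf_lin Ga)) (leaf_lin Gc)) (leaf_lin Gd)) \<noteq> T_ac_bd"
  by code_simp

lemma tr262: "(merge_lin (leaf_lin Gd) (merge_lin (merge_lin (leaf_lin Gb) (leaf_lin Ga)) (leaf_lin Gc))) \<noteq> T_ac_bd"
  by code_simp

lemma tr263: "(merge_lin (merge_lin (leaf_lin Gc) (merge_lin (leaf_lin Gb) (leaf_lin Ga))) (leaf_lin Gd)) \<noteq> T_ac_bd"
  by code_simp

lemma tr264: "(merge_lin (leaf_lin Gd) (merge_lin (leaf_lin Gc) (merge_lin (leaf_lin Gb) (leaf_lin Ga)))) \<noteq> T_ac_bd"
  by code_simp

lemma tr265: "(merge_lin (merge_lin (merge_lin (leaf_lin Ga) (leaf_lin Gc)) (leaf_lin Gb)) (leaf_lin Gd)) \<noteq> T_ac_bd"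
  by code_simp

lemma tr266: "(merge_lin (leaf_lin Gd) (merge_lin (merge_lin (leaf_lin Ga) (leaf_lin Gc)) (leaf_lin Gb))) \<noteq> T_ac_bd"
  by code_simp

lemma tr267: "(merge_lin (merge_lin (leaf_lin Gb) (merge_lin (leaf_lin Ga) (leaf_lin Gc))) (leaf_lin Gd)) \<noteq> T_ac_bd"
  by code_simp

lemma tr268: "(merge_lin (leaf_lin Gd) (merge_lin (leaf_lin Gb) (merge_lin (leaf_lin Ga) (leaf_lin Gc)))) \<noteq> T_ac_bd"
  by code_simp

lemma tr269: "(merge_lin (merge_lin (merge_lin (leaf_lin Gc) (leaf_lin Ga)) (leaf_lin Gb)) (leaf_lin Gd)) \<noteq> T_ac_bd"
  by code_simp

lemma tr270: "(merge_lin (leaf_lin Gd) (merge_lin (merge_lin (leaf_lin Gc) (leaf_lin Ga)) (leaf_lin Gb))) \<noteq> T_ac_bd"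
  by code_simp

lemma tr271: "(merge_lin (merge_lin (leaf_lin Gb) (merge_lin (leaf_lin Gc) (leaf_lin Ga))) (leaf_lin Gd)) \<noteq> T_ac_bd"
  by code_simp

lemma tr272: "(merge_lin (leaf_lin Gd) (merge_lin (leaf_lin Gb) (merge_lin (leaf_lin Gc) (leaf_lin Ga)))) \<noteq> T_ac_bd"
  by code_simp

lemma tr273: "(merge_lin (merge_lin (merge_lin (leaf_lin Gb) (leaf_lin Gc)) (leaf_lin Ga)) (leaf_lin Gd)) \<noteq> T_ac_bd"
  by code_simp

lemma tr274: "(merge_lin (leaf_lin Gd) (merge_lin (merge_lin (leaf_lin Gb) (leaf_lin Gc)) (leaf_lin Ga))) \<noteq> T_ac_bd"
  by code_simp

lemma tr275: "(merge_lin (merge_lin (leaf_lin Ga) (merge_lin (leaf_lin Gb) (leaf_lin Gc))) (leaf_lin Gd)) \<noteq> T_ac_bd"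
  by code_simp

lemma tr276: "(merge_lin (leaf_lin Gd) (merge_lin (leaf_lin Ga) (merge_lin (leaf_lin Gb) (leaf_lin Gc)))) \<noteq> T_ac_bd"
  by code_simp

lemma tr277: "(merge_lin (merge_lin (merge_lin (leaf_lin Gc) (leaf_lin Gb)) (leaf_lin Ga)) (leaf_lin Gd)) \<noteq> T_ac_bd"
  by code_simp

lemma tr278: "(merge_lin (leaf_lin Gd) (merge_lin (merge_lin (leaf_lin Gc) (leaf_lin Gb)) (leaf_lin Ga))) \<noteq> T_ac_bd"
  by code_simp

lemma tr279: "(merge_lin (merge_lin (leaf_lin Ga) (merge_lin (leaf_lin Gc) (leaf_lin Gb))) (leaf_lin Gd)) \<noteq> T_ac_bd"
  by code_simp

lemma tr280: "(merge_lin (leaf_lin Gd) (merge_lin (leaf_lin Ga) (merge_lin (leaf_lin Gc) (leaf_lin Gb)))) \<noteq> T_ac_bd"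
  by code_simp

lemma tr281: "(merge_lin (merge_lin (leaf_lin Ga) (leaf_lin Gb)) (merge_lin (leaf_lin Gd) (leaf_lin Gc))) \<noteq> T_ac_bd"
  by code_simp

lemma tr282: "(merge_lin (merge_lin (leaf_lin Gd) (leaf_lin Gc)) (merge_lin (leaf_lin Ga) (leaf_lin Gb))) \<noteq> T_ac_bd"
  by code_simp

lemma tr283: "(merge_lin (merge_lin (leaf_lin Ga) (leaf_lin Gb)) (merge_lin (leaf_lin Gc) (leaf_lin Gd))) \<noteq> T_ac_bd"
  by code_simp

lemma tr284: "(merge_lin (merge_lin (leaf_lin Gc) (leaf_lin Gd)) (merge_lin (leaf_lin Ga) (leaf_lin Gb))) \<noteq> T_ac_bd"
  by code_simp

lemma tr285: "(merge_lin (merge_lin (leaf_lin Gb) (leaf_lin Ga)) (merge_lin (leaf_lin Gd) (leaf_lin Gc))) \<noteq> T_ac_bd"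
  by code_simp

lemma tr286: "(merge_lin (merge_lin (leaf_lin Gd) (leaf_lin Gc)) (merge_lin (leaf_lin Gb) (leaf_lin Ga))) \<noteq> T_ac_bd"
  by code_simp

lemma tr287: "(merge_lin (merge_lin (leaf_lin Gb) (leaf_lin Ga)) (merge_lin (leaf_lin Gc) (leaf_lin Gd))) \<noteq> T_ac_bd"
  by code_simp

lemma tr288: "(merge_lin (merge_lin (leaf_lin Gc) (leaf_lin Gd)) (merge_lin (leaf_lin Gb) (leaf_lin Ga))) \<noteq> T_ac_bd"
  by code_simp

lemma tr289: "(merge_lin (merge_lin (leaf_lin Ga) (leaf_lin Gc)) (merge_lin (leaf_lin Gd) (leaf_lin Gb))) = T_ac_bd"
  by code_simp

lemma tr290: "(merge_lin (merge_lin (leaf_lin Gd) (leaf_lin Gb)) (merge_lin (leaf_lin Ga) (leaf_lin Gc))) = T_ac_bd"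
  by code_simp

lemma tr291: "(merge_lin (merge_lin (leaf_lin Ga) (leaf_lin Gc)) (merge_lin (leaf_lin Gb) (leaf_lin Gd))) = T_ac_bd"
  by code_simp

lemma tr292: "(merge_lin (merge_lin (leaf_lin Gb) (leaf_lin Gd)) (merge_lin (leaf_lin Ga) (leaf_lin Gc))) = T_ac_bd"
  by code_simp

lemma tr293: "(merge_lin (merge_lin (leaf_lin Gc) (leaf_lin Ga)) (merge_lin (leaf_lin Gd) (leaf_lin Gb))) = T_ac_bd"
  by code_simp

lemma tr294: "(merge_lin (merge_lin (leaf_lin Gd) (leaf_lin Gb)) (merge_lin (leaf_lin Gc) (leaf_lin Ga))) = T_ac_bd"
  by code_simp

lemma tr295: "(merge_lin (merge_lin (leaf_lin Gc) (leaf_lin Ga)) (merge_lin (leaf_lin Gb) (leaf_lin Gd))) = T_ac_bd"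
  by code_simp

lemma tr296: "(merge_lin (merge_lin (leaf_lin Gb) (leaf_lin Gd)) (merge_lin (leaf_lin Gc) (leaf_lin Ga))) = T_ac_bd"
  by code_simp

lemma tr297: "(merge_lin (leaf_lin Ga) (merge_lin (merge_lin (leaf_lin Gd) (leaf_lin Gb)) (leaf_lin Gc))) \<noteq> T_ac_bd"
  by code_simp

lemma tr298: "(merge_lin (merge_lin (merge_lin (leaf_lin Gd) (leaf_lin Gb)) (leaf_lin Gc)) (leaf_lin Ga)) \<noteq> T_ac_bd"
  by code_simp

lemma tr299: "(merge_lin (leaf_lin Ga) (merge_lin (leaf_lin Gc) (merge_lin (leaf_lin Gd) (leaf_lin Gb)))) \<noteq> T_ac_bd"
  by code_simp

lemma tr300: "(merge_lin (merge_lin (leaf_lin Gc) (merge_lin (leaf_lin Gd) (leaf_lin Gb))) (leaf_lin Ga)) \<noteq> T_ac_bd"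
  by code_simp

lemma tr301: "(merge_lin (leaf_lin Ga) (merge_lin (merge_lin (leaf_lin Gb) (leaf_lin Gd)) (leaf_lin Gc))) \<noteq> T_ac_bd"
  by code_simp

lemma tr302: "(merge_lin (merge_lin (merge_lin (leaf_lin Gb) (leaf_lin Gd)) (leaf_lin Gc)) (leaf_lin Ga)) \<noteq> T_ac_bd"
  by code_simp

lemma tr303: "(merge_lin (leaf_lin Ga) (merge_lin (leaf_lin Gc) (merge_lin (leaf_lin Gb) (leaf_lin Gd)))) \<noteq> T_ac_bd"
  by code_simp

lemma tr304: "(merge_lin (merge_lin (leaf_lin Gc) (merge_lin (leaf_lin Gb) (leaf_lin Gd))) (leaf_lin Ga)) \<noteq> T_ac_bd"
  by code_simp

lemma tr305: "(merge_lin (leaf_lin Ga) (merge_lin (merge_lin (leaf_lin Gd) (leaf_lin Gc)) (leaf_lin Gb))) \<noteq> T_ac_bd"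
  by code_simp

lemma tr306: "(merge_lin (merge_lin (merge_lin (leaf_lin Gd) (leaf_lin Gc)) (leaf_lin Gb)) (leaf_lin Ga)) \<noteq> T_ac_bd"
  by code_simp

lemma tr307: "(merge_lin (leaf_lin Ga) (merge_lin (leaf_lin Gb) (merge_lin (leaf_lin Gd) (leaf_lin Gc)))) \<noteq> T_ac_bd"
  by code_simp

lemma tr308: "(merge_lin (merge_lin (leaf_lin Gb) (merge_lin (leaf_lin Gd) (leaf_lin Gc))) (leaf_lin Ga)) \<noteq> T_ac_bd"
  by code_simp

lemma tr309: "(merge_lin (leaf_lin Ga) (merge_lin (merge_lin (leaf_lin Gc) (leaf_lin Gd)) (leaf_lin Gb))) \<noteq> T_ac_bd"
  by code_simp

lemma tr310: "(merge_lin (merge_lin (merge_lin (leaf_lin Gc) (leaf_lin Gd)) (leaf_lin Gb)) (leaf_lin Ga)) \<noteq> T_ac_bd"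
  by code_simp

lemma tr311: "(merge_lin (leaf_lin Ga) (merge_lin (leaf_lin Gb) (merge_lin (leaf_lin Gc) (leaf_lin Gd)))) \<noteq> T_ac_bd"
  by code_simp

lemma tr312: "(merge_lin (merge_lin (leaf_lin Gb) (merge_lin (leaf_lin Gc) (leaf_lin Gd))) (leaf_lin Ga)) \<noteq> T_ac_bd"
  by code_simp

lemma tr313: "(merge_lin (leaf_lin Ga) (merge_lin (merge_lin (leaf_lin Gb) (leaf_lin Gc)) (leaf_lin Gd))) \<noteq> T_ac_bd"
  by code_simp

lemma tr314: "(merge_lin (merge_lin (merge_lin (leaf_lin Gb) (leaf_lin Gc)) (leaf_lin Gd)) (leaf_lin Ga)) \<noteq> T_ac_bd"
  by code_simp

lemma tr315: "(merge_lin (leaf_lin Ga) (merge_lin (leaf_lin Gd) (merge_lin (leaf_lin Gb) (leaf_lin Gc)))) \<noteq> T_ac_bd"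
  by code_simp

lemma tr316: "(merge_lin (merge_lin (leaf_lin Gd) (merge_lin (leaf_lin Gb) (leaf_lin Gc))) (leaf_lin Ga)) \<noteq> T_ac_bd"
  by code_simp

lemma tr317: "(merge_lin (leaf_lin Ga) (merge_lin (merge_lin (leaf_lin Gc) (leaf_lin Gb)) (leaf_lin Gd))) \<noteq> T_ac_bd"
  by code_simp

lemma tr318: "(merge_lin (merge_lin (merge_lin (leaf_lin Gc) (leaf_lin Gb)) (leaf_lin Gd)) (leaf_lin Ga)) \<noteq> T_ac_bd"
  by code_simp

lemma tr319: "(merge_lin (leaf_lin Ga) (merge_lin (leaf_lin Gd) (merge_lin (leaf_lin Gc) (leaf_lin Gb)))) \<noteq> T_ac_bd"
  by code_simp

lemma tr320: "(merge_lin (merge_lin (leaf_lin Gd) (merge_lin (leaf_lin Gc) (leaf_lin Gb))) (leaf_lin Ga)) \<noteq> T_ac_bd"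
  by code_simp

lemma tr321: "T_disp1 \<noteq> T_disp2"
  by code_simp

lemma tr322: "T_disp1 \<noteq> T_ab_cd"
  by code_simp

lemma tr323: "T_disp1 \<noteq> T_ac_bd"
  by code_simp

lemma tr324: "T_disp2 \<noteq> T_disp1"
  by code_simp

lemma tr325: "T_disp2 \<noteq> T_ab_cd"
  by code_simp

lemma tr326: "T_disp2 \<noteq> T_ac_bd"
  by code_simp

lemma tr327: "T_ab_cd \<noteq> T_disp1"
  by code_simp

lemma tr328: "T_ab_cd \<noteq> T_disp2"
  by code_simp

lemma tr329: "T_ab_cd \<noteq> T_ac_bd"
  by code_simp

lemma tr330: "T_ac_bd \<noteq> T_disp1"
  by code_simp

lemma tr331: "T_ac_bd \<noteq> T_disp2"
  by code_simp

lemma tr332: "T_ac_bd \<noteq> T_ab_cd"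
  by code_simp

lemmas lin_facts = ne1 ne2 ne3 ne4 ne5 ne6 ne7 ne8 ne9 ne10 ne11 ne12 ne13 ne14 ne15 ne16 ne17 ne18 ne19 ne20 ne21 ne22 ne23 ne24 tr1 tr2 tr3 tr4 tr5 tr6 tr7 tr8 tr9 tr10 tr11 tr12 tr13 tr14 tr15 tr16 tr17 tr18 tr19 tr20 tr21 tr22 tr23 tr24 tr25 tr26 tr27 tr28 tr29 tr30 tr31 tr32 tr33 tr34 tr35 tr36 tr37 tr38 tr39 tr40 tr41 tr42 tr43 tr44 tr45 tr46 tr47 tr48 tr49 tr50 tr51 tr52 tr53 tr54 tr55 tr56 tr57 tr58 tr59 tr60 tr61 tr62 tr63 tr64 tr65 tr66 tr67 tr68 tr69 tr70 tr71 tr72 tr73 tr74 tr75 tr76 tr77 tr78 tr79 tr80 tr81 tr82 tr83 tr84 tr85 tr86 tr87 tr88 tr89 tr90 tr91 tr92 tr93 tr94 tr95 tr96 tr97 tr98 tr99 tr100 tr101 tr102 tr103 tr104 tr105 tr106 tr107 tr108 tr109 tr110 tr111 tr112 tr113 tr114 tr115 tr116 tr117 tr118 tr119 tr120 tr121 tr122 tr123 tr124 tr125 tr126 tr127 tr128 tr129 tr130 tr131 tr132 tr133 tr134 tr135 tr136 tr137 tr138 tr139 tr140 tr141 tr142 tr143 tr144 tr145 tr146 tr147 tr148 tr149 tr150 tr151 tr152 tr153 tr154 tr155 tr156 tr157 tr158 tr159 tr160 tr161 tr162 tr163 tr164 tr165 tr166 tr167 tr168 tr169 tr170 tr171 tr172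 tr173 tr174 tr175 tr176 tr177 tr178 tr179 tr180 tr181 tr182 tr183 tr184 tr185 tr186 tr187 tr188 tr189 tr190 tr191 tr192 tr193 tr194 tr195 tr196 tr197 tr198 tr199 tr200 tr201 tr202 tr203 tr204 tr205 tr206 tr207 tr208 tr209 tr210 tr211 tr212 tr213 tr214 tr215 tr216 tr217 tr218 tr219 tr220 tr221 tr222 tr223 tr224 tr225 tr226 tr227 tr228 tr229 tr230 tr231 tr232 tr233 tr234 tr235 tr236 tr237 tr238 tr239 tr240 tr241 tr242 tr243 tr244 tr245 tr246 tr247 tr248 tr249 tr250 tr251 tr252 tr253 tr254 tr255 tr256 tr257 tr258 tr259 tr260 tr261 tr262 tr263 tr264 tr265 tr266 tr267 tr268 tr269 tr270 tr271 tr272 tr273 tr274 tr275 tr276 tr277 tr278 tr279 tr280 tr281 tr282 tr283 tr284 tr285 tr286 tr287 tr288 tr289 tr290 tr291 tr292 tr293 tr294 tr295 tr296 tr297 tr298 tr299 tr300 tr301 tr302 tr303 tr304 tr305 tr306 tr307 tr308 tr309 tr310 tr311 tr312 tr313 tr314 tr315 tr316 tr317 tr318 tr319 tr320 tr321 tr322 tr323 tr324 tr325 tr326 tr327 tr328 tr329 tr330 tr331 tr332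

lemma psi_inf_disp1:
  assumes "y \<ge> 0"
  shows "pmf (psi_inf y 0 (1/2)) T_disp1 = 1/2 - 5/12 * exp (-y)"
  unfolding psi_inf_def using assms
  apply (simp add: branch2 split1 split2 branch0_small branch0_2 full1 full2 full3 root2 bind_return_pmf pmf_return lin_facts)
  by (simp add: field_simps)

lemma psi_inf_disp2:
  assumes "y \<ge> 0"
  shows "pmf (psi_inf y 0 (1/2)) T_disp2 = 1/2 - 5/12 * exp (-y)"
  unfolding psi_inf_def using assms
  apply (simp add: branch2 split1 split2 branch0_small branch0_2 full1 full2 full3 root2 bind_return_pmf pmf_return lin_facts)
  by (simp add: field_simps)

lemma psi_inf_ab_cd:
  assumes "y \<ge> 0"
  shows "pmf (psi_inf y 0 (1/2)) T_ab_cd = exp (-y) / 4"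
  unfolding psi_inf_def using assms
  by (simp add: branch2 split1 split2 branch0_small branch0_2 full1 full2 full3 root2 bind_return_pmf pmf_return lin_facts)

lemma psi_inf_ac_bd:
  assumes "y \<ge> 0"
  shows "pmf (psi_inf y 0 (1/2)) T_ac_bd = exp (-y) / 4"
  unfolding psi_inf_def using assms
  by (simp add: branch2 split1 split2 branch0_small branch0_2 full1 full2 full3 root2 bind_return_pmf pmf_return lin_facts)


lemma tendsto_from_bound:
  fixes f :: "real \<Rightarrow> real"
  assumes "\<And>x. x \<ge> 0 \<Longrightarrow> \<bar>f x - c\<bar> \<le> 8 * exp (-x)"
  shows "(f \<longlongrightarrow> c) at_top"
proof -
  have lim0: "((\<lambda>x::real. 8 * exp (-x)) \<longlongrightarrow> 0) at_top" by real_asymp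
  have ev: "\<forall>\<^sub>F x in at_top. norm (f x - c) \<le> 8 * exp (-x)"
    using eventually_ge_at_top[of "0::real"] by eventually_elim (use assms in auto)
  have "((\<lambda>x. f x - c) \<longlongrightarrow> 0) at_top"
    by (rule Lim_null_comparison[OF ev lim0])
  then have "((\<lambda>x. (f x - c) + c) \<longlongrightarrow> 0 + c) at_top"
    by (intro tendsto_add tendsto_const)
  then show ?thesis by simp
qed

lemma psi_lim:
  "((\<lambda>x. psi_prob x y 0 gam G) \<longlongrightarrow> pmf (psi_inf y 0 gam) G) at_top"
  by (rule tendsto_from_bound) (rule psi_approx)

theorem mainTheorem3:
  fixes y :: real
  assumes "y > 0"
  shows "((\<lambda>x. psi_prob x y 0 (1/2) T_ab_cd) \<longlongrightarrow> exp (- y) / 4) at_top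
       \<and> ((\<lambda>x. psi_prob x y 0 (1/2) T_ac_bd) \<longlongrightarrow> exp (- y) / 4) at_top
       \<and> ((\<lambda>x. psi_prob x y 0 (1/2) T_disp1) \<longlongrightarrow> 1/2 - 5/12 * exp (- y)) at_top
       \<and> ((\<lambda>x. psi_prob x y 0 (1/2) T_disp2) \<longlongrightarrow> 1/2 - 5/12 * exp (- y)) at_top
       \<and> (exp (- y) / 4 > 1/2 - 5/12 * exp (- y) \<longleftrightarrow> y < ln (4/3))
       \<and> (y < ln (4/3) \<longrightarrow>
            (\<forall>\<^sub>F x in at_top. \<forall>D \<in> displayed_trees.
               \<exists>G. psi_prob x y 0 (1/2) D < psi_prob x y 0 (1/2) G))"
proof -
  have y0: "y \<ge> 0" using assms by simp
  have L1: "((\<lambda>x. psi_prob x y 0 (1/2) T_ab_cd) \<longlongrightarrow> exp (- y) / 4) at_top"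
    using psi_lim[of y "1/2" T_ab_cd] psi_inf_ab_cd[OF y0] by simp
  have L2: "((\<lambda>x. psi_prob x y 0 (1/2) T_ac_bd) \<longlongrightarrow> exp (- y) / 4) at_top"
    using psi_lim[of y "1/2" T_ac_bd] psi_inf_ac_bd[OF y0] by simp
  have L3: "((\<lambda>x. psi_prob x y 0 (1/2) T_disp1) \<longlongrightarrow> 1/2 - 5/12 * exp (- y)) at_top"
    using psi_lim[of y "1/2" T_disp1] psi_inf_disp1[OF y0] by simp
  have L4: "((\<lambda>x. psi_prob x y 0 (1/2) T_disp2) \<longlongrightarrow> 1/2 - 5/12 * exp (- y)) at_top"
    using psi_lim[of y "1/2" T_disp2] psi_inf_disp2[OF y0] by simp
  have iff1: "exp (- y) / 4 > 1/2 - 5/12 * exp (- y) \<longleftrightarrow> 3/4 < exp (-y)" by auto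
  have "3/4 < exp (-y) \<longleftrightarrow> ln (3/4) < ln (exp (-y))"
    by (rule ln_less_cancel_iff[symmetric]) auto
  also have "\<dots> \<longleftrightarrow> y < ln (4/3)"
    by (simp add: ln_div, linarith)
  finally have I: "exp (- y) / 4 > 1/2 - 5/12 * exp (- y) \<longleftrightarrow> y < ln (4/3)" using iff1 by simp
  have E: "\<forall>\<^sub>F x in at_top. \<forall>D \<in> displayed_trees.
               \<exists>G. psi_prob x y 0 (1/2) D < psi_prob x y 0 (1/2) G" if yl: "y < ln (4/3)"
  proof -
    have gap: "0 < exp (- y) / 4 - (1/2 - 5/12 * exp (- y))" using I yl by simp
    have e1: "\<forall>\<^sub>F x in at_top. 0 < psi_prob x y 0 (1/2) T_ab_cd - psi_prob x y 0 (1/2) T_disp1"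
      by (rule order_tendstoD(1)[OF tendsto_diff[OF L1 L3] gap])
    have e2: "\<forall>\<^sub>F x in at_top. 0 < psi_prob x y 0 (1/2) T_ab_cd - psi_prob x y 0 (1/2) T_disp2"
      by (rule order_tendstoD(1)[OF tendsto_diff[OF L1 L4] gap])
    show ?thesis
      using e1 e2 by eventually_elim (auto simp: displayed_trees_def)
  qed
  show ?thesis using L1 L2 L3 L4 I E by blast
qed

end
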